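(* Let $d\geqslant 2$ and $k\geqslant 1$ be integers and let $a\in\mathbb{Z}_p$. Then (1) $L^d(a)$ is self-similar of index $p^k$, and (2) $L^d(a)$ is strongly hereditarily self-similar of index $p^k$.
   Context: $p$ is any prime. For $d\geqslant 2$ and $a\in\mathbb{Z}_p$, $L^d(a)$ is the $\mathbb{Z}_p$-Lie lattice $\mathbb{Z}_p^d$ with canonical basis $(x_0,\dots,x_{d-1})$ and bracket determined by $[x_i,x_j]=0$ and $[x_0,x_i]=ax_i$ for $i,j\in\{1,\dots,d-1\}$. A virtual endomorphism of a $\mathbb{Z}_p$-Lie lattice $L$ is a homomorphism of algebras $\varphi:M\to L$ with $M\subseteq L$ a finite-index subalgebra, of index $[L:M]$. An ideal $I$ of $L$ is $\varphi$-invariant if it lies in the domain of every power of $\varphi$ and $\varphi(I)\subseteq I$; $\varphi$ is simple if no non-zero ideal is $\varphi$-invariant. $L$ is self-similar of index $p^k$ if it has a simple virtual endomorphism of index $p^k$; it is strongly hereditarily self-similar of index $p^k$ if it is self-similar of index $p^k$ and every non-zero subalgebra of $L$ is self-similar of index $p^k$. *)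

theory Defs
  imports Main "HOL-Computational_Algebra.Primes"
begin

section \<open>The p-adic integers as compatible sequences of residues\<close>

type_synonym zp = "nat \<Rightarrow> int"

definition Zp :: "nat \<Rightarrow> zp set" where
  "Zp p = {x. \<forall>n. 0 \<le> x n \<and> x n < int p ^ n \<and> x (Suc n) mod (int p ^ n) = x n}"

definition zp_zero :: zp where "zp_zero = (\<lambda>n. 0)"
definition zp_add :: "nat \<Rightarrow> zp \<Rightarrow> zp \<Rightarrow> zp" where
  "zp_add p x y = (\<lambda>n. (x n + y n) mod (int p ^ n))"
definition zp_neg :: "nat \<Rightarrow> zp \<Rightarrow> zp" where
  "zp_neg p x = (\<lambda>n. (- x n) mod (int p ^ n))"
definition zp_mul :: "nat \<Rightarrow> zp \<Rightarrow> zp \<Rightarrow> zp" where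
  "zp_mul p x y = (\<lambda>n. (x n * y n) mod (int p ^ n))"

type_synonym zvec = "nat \<Rightarrow> zp"

definition Vd :: "nat \<Rightarrow> nat \<Rightarrow> zvec set" where
  "Vd p d = {v. (\<forall>i<d. v i \<in> Zp p) \<and> (\<forall>i\<ge>d. v i = zp_zero)}"

definition vzero :: zvec where "vzero = (\<lambda>i. zp_zero)"
definition vadd :: "nat \<Rightarrow> zvec \<Rightarrow> zvec \<Rightarrow> zvec" where
  "vadd p v w = (\<lambda>i. zp_add p (v i) (w i))"
definition vsub :: "nat \<Rightarrow> zvec \<Rightarrow> zvec \<Rightarrow> zvec" where
  "vsub p v w = (\<lambda>i. zp_add p (v i) (zp_neg p (w i)))"
definition vsmul :: "nat \<Rightarrow> zp \<Rightarrow> zvec \<Rightarrow> zvec" where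
  "vsmul p c v = (\<lambda>i. zp_mul p c (v i))"

text \<open>Bracket of L^d(a): bilinear extension of [x_i,x_j]=0, [x_0,x_i]=a x_i (i,j \<ge> 1),
  i.e. [u,v] = a * sum_{i>=1} (u_0 v_i - v_0 u_i) x_i.\<close>
definition Ld_br :: "nat \<Rightarrow> zp \<Rightarrow> zvec \<Rightarrow> zvec \<Rightarrow> zvec" where
  "Ld_br p a u v = (\<lambda>i. if 1 \<le> i
      then zp_mul p a (zp_add p (zp_mul p (u 0) (v i)) (zp_neg p (zp_mul p (v 0) (u i))))
      else zp_zero)"

definition submod :: "nat \<Rightarrow> nat \<Rightarrow> zvec set \<Rightarrow> bool" where
  "submod p d S \<longleftrightarrow> S \<subseteq> Vd p d \<and> vzero \<in> S \<and>
     (\<forall>u\<in>S. \<forall>v\<in>S. vadd p u v \<in> S) \<and> (\<forall>c\<in>Zp p. \<forall>u\<in>S. vsmul p c u \<in> S)"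

definition subalg :: "nat \<Rightarrow> nat \<Rightarrow> (zvec \<Rightarrow> zvec \<Rightarrow> zvec) \<Rightarrow> zvec set \<Rightarrow> zvec set \<Rightarrow> bool" where
  "subalg p d br H S \<longleftrightarrow> submod p d S \<and> S \<subseteq> H \<and> (\<forall>u\<in>S. \<forall>v\<in>S. br u v \<in> S)"

definition lie_ideal :: "nat \<Rightarrow> nat \<Rightarrow> (zvec \<Rightarrow> zvec \<Rightarrow> zvec) \<Rightarrow> zvec set \<Rightarrow> zvec set \<Rightarrow> bool" where
  "lie_ideal p d br H I \<longleftrightarrow> submod p d I \<and> I \<subseteq> H \<and> (\<forall>h\<in>H. \<forall>x\<in>I. br h x \<in> I)"

definition lat_index :: "nat \<Rightarrow> zvec set \<Rightarrow> zvec set \<Rightarrow> nat" where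
  "lat_index p H M = card (H // {(u,v). u \<in> H \<and> v \<in> H \<and> vsub p u v \<in> M})"

definition finite_index :: "nat \<Rightarrow> zvec set \<Rightarrow> zvec set \<Rightarrow> bool" where
  "finite_index p H M \<longleftrightarrow> finite (H // {(u,v). u \<in> H \<and> v \<in> H \<and> vsub p u v \<in> M})"

definition virt_endo :: "nat \<Rightarrow> nat \<Rightarrow> (zvec \<Rightarrow> zvec \<Rightarrow> zvec) \<Rightarrow> zvec set \<Rightarrow> zvec set
     \<Rightarrow> (zvec \<Rightarrow> zvec) \<Rightarrow> bool" where
  "virt_endo p d br H M \<phi> \<longleftrightarrow> subalg p d br H M \<and> finite_index p H M \<and> \<phi> ` M \<subseteq> H \<and>
     (\<forall>u\<in>M. \<forall>v\<in>M. \<phi> (vadd p u v) = vadd p (\<phi> u) (\<phi> v)) \<and>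
     (\<forall>c\<in>Zp p. \<forall>u\<in>M. \<phi> (vsmul p c u) = vsmul p c (\<phi> u)) \<and>
     (\<forall>u\<in>M. \<forall>v\<in>M. \<phi> (br u v) = br (\<phi> u) (\<phi> v))"

fun pow_dom :: "zvec set \<Rightarrow> zvec set \<Rightarrow> (zvec \<Rightarrow> zvec) \<Rightarrow> nat \<Rightarrow> zvec set" where
  "pow_dom H M \<phi> 0 = H"
| "pow_dom H M \<phi> (Suc n) = {x \<in> M. \<phi> x \<in> pow_dom H M \<phi> n}"

definition phi_invariant :: "zvec set \<Rightarrow> zvec set \<Rightarrow> (zvec \<Rightarrow> zvec) \<Rightarrow> zvec set \<Rightarrow> bool" where
  "phi_invariant H M \<phi> I \<longleftrightarrow> (\<forall>n. I \<subseteq> pow_dom H M \<phi> n) \<and> \<phi> ` I \<subseteq> I"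

definition simple_ve :: "nat \<Rightarrow> nat \<Rightarrow> (zvec \<Rightarrow> zvec \<Rightarrow> zvec) \<Rightarrow> zvec set \<Rightarrow> zvec set
     \<Rightarrow> (zvec \<Rightarrow> zvec) \<Rightarrow> bool" where
  "simple_ve p d br H M \<phi> \<longleftrightarrow>
     (\<forall>I. lie_ideal p d br H I \<and> I \<noteq> {vzero} \<longrightarrow> \<not> phi_invariant H M \<phi> I)"

definition self_similar :: "nat \<Rightarrow> nat \<Rightarrow> (zvec \<Rightarrow> zvec \<Rightarrow> zvec) \<Rightarrow> zvec set \<Rightarrow> nat \<Rightarrow> bool" where
  "self_similar p d br H k \<longleftrightarrow>
     (\<exists>M \<phi>. virt_endo p d br H M \<phi> \<and> lat_index p H M = p ^ k \<and> simple_ve p d br H M \<phi>)"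

definition strongly_hered_self_similar ::
    "nat \<Rightarrow> nat \<Rightarrow> (zvec \<Rightarrow> zvec \<Rightarrow> zvec) \<Rightarrow> zvec set \<Rightarrow> nat \<Rightarrow> bool" where
  "strongly_hered_self_similar p d br H k \<longleftrightarrow> self_similar p d br H k \<and>
     (\<forall>S. subalg p d br H S \<and> S \<noteq> {vzero} \<longrightarrow> self_similar p d br S k)"

end

theory Submission
  imports Defs
begin


abbreviation PP :: "nat \<Rightarrow> nat \<Rightarrow> int" where "PP p n \<equiv> int p ^ n"

lemma Zp_iff: "x \<in> Zp p \<longleftrightarrow> (\<forall>n. 0 \<le> x n \<and> x n < int p ^ n \<and> x (Suc n) mod (int p ^ n) = x n)"
  by (simp add: Zp_def)

lemma Zp_range: "x \<in> Zp p \<Longrightarrow> 0 \<le> x n \<and> x n < int p ^ n" by (simp add: Zp_def)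
lemma Zp_0: "x \<in> Zp p \<Longrightarrow> x 0 = 0" using Zp_range[of x p 0] by simp
lemma Zp_mod: "x \<in> Zp p \<Longrightarrow> x n mod int p ^ n = x n" by (simp add: Zp_def)

lemma Zp_coh: assumes "x \<in> Zp p" "m \<le> n" shows "x n mod int p ^ m = x m"
  using assms(2)
proof (induction n)
  case 0 then show ?case using assms(1) by (simp add: Zp_0)
next
  case (Suc n)
  show ?case
  proof (cases "m = Suc n")
    case True show ?thesis unfolding True by (rule Zp_mod[OF assms(1)])
  next
    case False
    then have "m \<le> n" using Suc by auto
    have "x (Suc n) mod int p ^ m = (x (Suc n) mod int p ^ n) mod int p ^ m"
      using \<open>m \<le> n\<close> by (simp add: mod_mod_cancel le_imp_power_dvd)
    also have "\<dots> = x n mod int p ^ m" using assms(1) by (simp add: Zp_def)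
    finally show ?thesis using Suc.IH \<open>m \<le> n\<close> by simp
  qed
qed


lemma Zp_intro:
  assumes "p > 0" and "\<And>n. f (Suc n) mod int p ^ n = f n mod int p ^ n"
  shows "(\<lambda>n. f n mod int p ^ n) \<in> Zp p"
proof -
  have "(f (Suc n) mod int p ^ Suc n) mod int p ^ n = f n mod int p ^ n" for n
    using assms(2)[of n] by (simp add: mod_mod_cancel le_imp_power_dvd)
  then show ?thesis using assms(1) by (simp add: Zp_def)
qed

lemma Zp_eqI: "x \<in> Zp p \<Longrightarrow> y \<in> Zp p \<Longrightarrow> (\<And>n. x n mod int p ^ n = y n mod int p ^ n) \<Longrightarrow> x = y"
  by (rule ext) (metis Zp_mod)

definition zp_one :: "nat \<Rightarrow> zp" where "zp_one p = (\<lambda>n. 1 mod int p ^ n)"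
definition zp_int :: "nat \<Rightarrow> int \<Rightarrow> zp" where "zp_int p z = (\<lambda>n. z mod int p ^ n)"

lemma coh_mod: "m \<le> n \<Longrightarrow> (a::int) mod int p ^ n mod int p ^ m = a mod int p ^ m"
  by (simp add: mod_mod_cancel le_imp_power_dvd)

lemma zp_int_Zp: "p > 0 \<Longrightarrow> zp_int p z \<in> Zp p"
  unfolding zp_int_def by (rule Zp_intro) auto

lemma zp_zero_Zp: "p > 0 \<Longrightarrow> zp_zero \<in> Zp p"
  by (simp add: Zp_def zp_zero_def)

lemma zp_one_Zp: "p > 0 \<Longrightarrow> zp_one p \<in> Zp p"
  unfolding zp_one_def by (rule Zp_intro) auto

lemma zp_add_Zp: "p > 0 \<Longrightarrow> x \<in> Zp p \<Longrightarrow> y \<in> Zp p \<Longrightarrow> zp_add p x y \<in> Zp p"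
  unfolding zp_add_def
  apply (rule Zp_intro, simp)
  proof -
  fix n assume "x \<in> Zp p" "y \<in> Zp p"
  then have "x (Suc n) mod int p ^ n = x n" "y (Suc n) mod int p ^ n = y n" by (simp_all add: Zp_def)
  then show "(x (Suc n) + y (Suc n)) mod int p ^ n = (x n + y n) mod int p ^ n"
    by (subst mod_add_eq[symmetric]) simp
qed

lemma zp_neg_Zp: "p > 0 \<Longrightarrow> x \<in> Zp p \<Longrightarrow> zp_neg p x \<in> Zp p"
  unfolding zp_neg_def
  apply (rule Zp_intro, simp)
  proof -
  fix n assume "x \<in> Zp p"
  then have "x (Suc n) mod int p ^ n = x n" by (simp_all add: Zp_def)
  then show "(- x (Suc n)) mod int p ^ n = (- x n) mod int p ^ n"
    by (subst mod_minus_eq[symmetric]) simp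
qed

lemma zp_mul_Zp: "p > 0 \<Longrightarrow> x \<in> Zp p \<Longrightarrow> y \<in> Zp p \<Longrightarrow> zp_mul p x y \<in> Zp p"
  unfolding zp_mul_def
  apply (rule Zp_intro, simp)
  proof -
  fix n assume "x \<in> Zp p" "y \<in> Zp p"
  then have "x (Suc n) mod int p ^ n = x n" "y (Suc n) mod int p ^ n = y n" by (simp_all add: Zp_def)
  then show "(x (Suc n) * y (Suc n)) mod int p ^ n = (x n * y n) mod int p ^ n"
    by (subst mod_mult_eq[symmetric]) simp
qed



lemma zp_mul_comm: "zp_mul p x y = zp_mul p y x"
  unfolding zp_mul_def by (simp add: mult.commute)
lemma zp_mul_assoc: "zp_mul p (zp_mul p x y) z = zp_mul p x (zp_mul p y z)"
  unfolding zp_mul_def by (rule ext) (simp add: mod_simps mult.assoc)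
lemma zp_add_comm: "zp_add p x y = zp_add p y x"
  unfolding zp_add_def by (simp add: add.commute)
lemma zp_add_assoc: "zp_add p (zp_add p x y) z = zp_add p x (zp_add p y z)"
  unfolding zp_add_def by (rule ext) (simp add: mod_simps add.assoc)

interpretation zpm: abel_semigroup "zp_mul p"
  by unfold_locales (rule zp_mul_assoc, rule zp_mul_comm)
interpretation zpa: abel_semigroup "zp_add p"
  by unfold_locales (rule zp_add_assoc, rule zp_add_comm)

lemma zp_one_mul: "x \<in> Zp p \<Longrightarrow> zp_mul p (zp_one p) x = x"
  unfolding zp_mul_def zp_one_def by (rule ext) (simp add: mod_simps Zp_mod)
lemma zp_mul_one: "x \<in> Zp p \<Longrightarrow> zp_mul p x (zp_one p) = x"
  by (subst zp_mul_comm) (rule zp_one_mul)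
lemma zp_zero_mul: "zp_mul p zp_zero x = zp_zero"
  unfolding zp_mul_def zp_zero_def by simp
lemma zp_mul_zero: "zp_mul p x zp_zero = zp_zero"
  unfolding zp_mul_def zp_zero_def by simp
lemma zp_add_zero: "x \<in> Zp p \<Longrightarrow> zp_add p x zp_zero = x"
  unfolding zp_add_def zp_zero_def by (rule ext) (simp add: Zp_mod)
lemma zp_zero_add: "x \<in> Zp p \<Longrightarrow> zp_add p zp_zero x = x"
  unfolding zp_add_def zp_zero_def by (rule ext) (simp add: Zp_mod)
lemma zp_distrib: "zp_mul p x (zp_add p y z) = zp_add p (zp_mul p x y) (zp_mul p x z)"
  unfolding zp_mul_def zp_add_def by (rule ext) (simp add: mod_simps distrib_left)
lemma zp_mul_neg: "zp_mul p x (zp_neg p y) = zp_neg p (zp_mul p x y)"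
  unfolding zp_mul_def zp_neg_def by (rule ext) (simp add: mod_simps)
lemma zp_add_neg: "zp_add p x (zp_neg p x) = zp_zero"
  unfolding zp_add_def zp_neg_def zp_zero_def by (rule ext) (simp add: mod_simps)
lemma zp_neg_zero: "zp_neg p zp_zero = zp_zero"
  unfolding zp_neg_def zp_zero_def by simp

lemma zp_eq_zero_iff: "x \<in> Zp p \<Longrightarrow> x = zp_zero \<longleftrightarrow> (\<forall>n. x n = 0)"
  unfolding zp_zero_def by auto

lemma zp_val:
  assumes "x \<in> Zp p" "x \<noteq> zp_zero"
  shows "\<exists>a. x a = 0 \<and> x (Suc a) \<noteq> 0"
proof -
  obtain n where n: "x n \<noteq> 0" using assms unfolding zp_zero_def by auto
  define m where "m = (LEAST n. x n \<noteq> 0)"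
  have m: "x m \<noteq> 0" unfolding m_def by (rule LeastI[of _ n]) (rule n)
  have "m \<noteq> 0" proof assume "m = 0" then show False using m Zp_0[OF assms(1)] by simp qed
  then obtain a where a: "m = Suc a" by (cases m) auto
  have "x a = 0" using not_less_Least[of a "\<lambda>n. x n \<noteq> 0"] a unfolding m_def by auto
  then show ?thesis using m a by auto
qed

lemma zp_dvd_of_zero:
  assumes "x \<in> Zp p" "x a = 0" "a \<le> N" shows "int p ^ a dvd x N"
  using Zp_coh[OF assms(1) assms(3)] assms(2) by (simp add: mod_eq_0_iff_dvd)

lemma zp_ndvd_of_nz:
  assumes "x \<in> Zp p" "x a \<noteq> 0" "a \<le> N" shows "\<not> int p ^ a dvd x N"
  using Zp_coh[OF assms(1) assms(3)] assms(2) by (metis dvd_eq_mod_eq_0)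

lemma zp_domain:
  assumes "prime p" "x \<in> Zp p" "y \<in> Zp p" "x \<noteq> zp_zero" "y \<noteq> zp_zero"
  shows "zp_mul p x y \<noteq> zp_zero"
proof
  assume H: "zp_mul p x y = zp_zero"
  obtain a where a: "x a = 0" "x (Suc a) \<noteq> 0" using zp_val[OF assms(2,4)] by auto
  obtain b where b: "y b = 0" "y (Suc b) \<noteq> 0" using zp_val[OF assms(3,5)] by auto
  define N where "N = Suc (a + b)"
  obtain s where s: "x N = int p ^ a * s" using zp_dvd_of_zero[OF assms(2) a(1), of N] N_def by (auto elim: dvdE)
  obtain t where t: "y N = int p ^ b * t" using zp_dvd_of_zero[OF assms(3) b(1), of N] N_def by (auto elim: dvdE)
  have ps: "\<not> int p dvd s"
  proof
    assume "int p dvd s"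
    then have "int p ^ Suc a dvd x N" using s by (auto simp: mult_dvd_mono)
    then show False using zp_ndvd_of_nz[OF assms(2) a(2), of N] N_def by auto
  qed
  have pt: "\<not> int p dvd t"
  proof
    assume "int p dvd t"
    then have "int p ^ Suc b dvd y N" using t by (auto simp: mult_dvd_mono)
    then show False using zp_ndvd_of_nz[OF assms(3) b(2), of N] N_def by auto
  qed
  have "(x N * y N) mod int p ^ N = 0" using H unfolding zp_mul_def zp_zero_def by meson
  then have "int p ^ N dvd int p ^ (a + b) * (s * t)" using s t by (simp add: mod_eq_0_iff_dvd power_add ac_simps)
  then have "int p ^ (a + b) * int p dvd int p ^ (a + b) * (s * t)" unfolding N_def by (simp add: ac_simps)
  then have "int p dvd s * t" using assms(1) by (subst (asm) dvd_times_left_cancel_iff) (auto simp: prime_gt_0_nat)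
  moreover have "prime (int p)" using assms(1) by simp
  ultimately show False using ps pt prime_dvd_mult_iff by blast
qed

lemma zp_cancel:
  assumes "prime p" "l \<in> Zp p" "m \<in> Zp p" "y \<in> Zp p" "y \<noteq> zp_zero"
    and "zp_mul p l y = zp_mul p m y"
  shows "l = m"
proof -
  have p0: "p > 0" using assms(1) prime_gt_0_nat by blast
  let ?D = "zp_add p l (zp_neg p m)"
  have "zp_mul p ?D y = zp_add p (zp_mul p l y) (zp_neg p (zp_mul p m y))"
    by (simp add: zp_mul_comm[of p _ y] zp_distrib zp_mul_neg)
  also have "\<dots> = zp_zero" using assms(6) by (simp add: zp_add_neg)
  finally have DD: "zp_mul p ?D y = zp_zero" .
  have DZ: "?D \<in> Zp p" using zp_add_Zp[OF p0 assms(2) zp_neg_Zp[OF p0 assms(3)]] .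
  have "?D = zp_zero"
  proof (rule ccontr)
    assume "?D \<noteq> zp_zero"
    from zp_domain[OF assms(1) DZ assms(4) this assms(5)] DD show False by simp
  qed
  then have "(l n - m n) mod int p ^ n = 0" for n
    unfolding zp_add_def zp_neg_def zp_zero_def by (metis (no_types) diff_conv_add_uminus mod_add_right_eq)
  then show ?thesis by (intro Zp_eqI[OF assms(2,3)]) (simp add: mod_eq_dvd_iff dvd_eq_mod_eq_0)
qed



definition zp_dv :: "nat \<Rightarrow> nat \<Rightarrow> zp \<Rightarrow> zp" where
  "zp_dv p k x = (\<lambda>n. x (n + k) div int p ^ k)"

lemma dv_eq:
  assumes "x \<in> Zp p" "x k = 0"
  shows "x (n + k) = int p ^ k * zp_dv p k x n"
proof -
  have "int p ^ k dvd x (n + k)" using zp_dvd_of_zero[OF assms] by simp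
  then show ?thesis unfolding zp_dv_def by simp
qed

lemma pk_mod: "p > 0 \<Longrightarrow> (int p ^ k * z) mod (int p ^ (n + k)) = int p ^ k * (z mod int p ^ n)"
  by (simp add: power_add mod_mult_mult1 ac_simps)

lemma dv_Zp:
  assumes "p > 0" "x \<in> Zp p" "x k = 0"
  shows "zp_dv p k x \<in> Zp p"
proof -
  have pk: "int p ^ k > 0" using assms(1) by simp
  have e: "x (n + k) = int p ^ k * zp_dv p k x n" for n using dv_eq[OF assms(2,3)] .
  have r: "0 \<le> zp_dv p k x n \<and> zp_dv p k x n < int p ^ n" for n
  proof -
    have "0 \<le> x (n + k)" "x (n + k) < int p ^ k * int p ^ n"
      using Zp_range[OF assms(2), of "n + k"] by (auto simp: power_add ac_simps)
    then show ?thesis using e[of n] pk by (simp add: zero_le_mult_iff)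
  qed
  have c: "zp_dv p k x (Suc n) mod int p ^ n = zp_dv p k x n" for n
  proof -
    have "x (Suc n + k) mod int p ^ (n + k) = x (n + k)"
      using Zp_coh[OF assms(2), of "n + k" "Suc n + k"] by simp
    then have "int p ^ k * (zp_dv p k x (Suc n) mod int p ^ n) = int p ^ k * zp_dv p k x n"
      using e[of "Suc n"] e[of n] pk_mod[OF assms(1)] by metis
    then show ?thesis using pk assms(1) by simp
  qed
  show ?thesis using r c by (simp add: Zp_def)
qed

lemma dv_add:
  assumes "p > 0" "x \<in> Zp p" "x k = 0" "y \<in> Zp p" "y k = 0"
  shows "zp_add p x y k = 0" "zp_dv p k (zp_add p x y) = zp_add p (zp_dv p k x) (zp_dv p k y)"
proof -
  show "zp_add p x y k = 0" using assms unfolding zp_add_def by simp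
  have pk: "int p ^ k > 0" using assms(1) by simp
  show "zp_dv p k (zp_add p x y) = zp_add p (zp_dv p k x) (zp_dv p k y)"
  proof (rule ext)
    fix n
    have e: "x (n + k) + y (n + k) = int p ^ k * (zp_dv p k x n + zp_dv p k y n)"
      using dv_eq[OF assms(2,3), of n] dv_eq[OF assms(4,5), of n] by (simp add: distrib_left)
    have "zp_dv p k (zp_add p x y) n = (x (n + k) + y (n + k)) mod int p ^ (n + k) div int p ^ k"
      by (simp add: zp_dv_def zp_add_def)
    also have "\<dots> = (int p ^ k * ((zp_dv p k x n + zp_dv p k y n) mod int p ^ n)) div int p ^ k"
      unfolding e pk_mod[OF assms(1)] ..
    also have "\<dots> = zp_add p (zp_dv p k x) (zp_dv p k y) n" using pk by (simp add: zp_add_def)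
    finally show "zp_dv p k (zp_add p x y) n = zp_add p (zp_dv p k x) (zp_dv p k y) n" .
  qed
qed

lemma dv_neg:
  assumes "p > 0" "x \<in> Zp p" "x k = 0"
  shows "zp_neg p x k = 0" "zp_dv p k (zp_neg p x) = zp_neg p (zp_dv p k x)"
proof -
  show "zp_neg p x k = 0" using assms unfolding zp_neg_def by simp
  have pk: "int p ^ k > 0" using assms(1) by simp
  show "zp_dv p k (zp_neg p x) = zp_neg p (zp_dv p k x)"
  proof (rule ext)
    fix n
    have e: "- x (n + k) = int p ^ k * (- zp_dv p k x n)"
      using dv_eq[OF assms(2,3), of n] by simp
    have "zp_dv p k (zp_neg p x) n = (- x (n + k)) mod int p ^ (n + k) div int p ^ k"
      by (simp add: zp_dv_def zp_neg_def)
    also have "\<dots> = (int p ^ k * ((- zp_dv p k x n) mod int p ^ n)) div int p ^ k"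
      unfolding e pk_mod[OF assms(1)] ..
    also have "\<dots> = zp_neg p (zp_dv p k x) n" using pk by (simp add: zp_neg_def)
    finally show "zp_dv p k (zp_neg p x) n = zp_neg p (zp_dv p k x) n" .
  qed
qed

lemma dv_mul:
  assumes "p > 0" "x \<in> Zp p" "x k = 0" "c \<in> Zp p"
  shows "zp_mul p c x k = 0" "zp_dv p k (zp_mul p c x) = zp_mul p c (zp_dv p k x)"
proof -
  show "zp_mul p c x k = 0" using assms unfolding zp_mul_def by simp
  have pk: "int p ^ k > 0" using assms(1) by simp
  show "zp_dv p k (zp_mul p c x) = zp_mul p c (zp_dv p k x)"
  proof (rule ext)
    fix n
    have cc: "c (n + k) mod int p ^ n = c n" using Zp_coh[OF assms(4), of n "n + k"] by simp
    have e: "c (n + k) * x (n + k) = int p ^ k * (c (n + k) * zp_dv p k x n)"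
      using dv_eq[OF assms(2,3), of n] by simp
    have "zp_dv p k (zp_mul p c x) n = (c (n + k) * x (n + k)) mod int p ^ (n + k) div int p ^ k"
      by (simp add: zp_dv_def zp_mul_def)
    also have "\<dots> = (int p ^ k * ((c (n + k) * zp_dv p k x n) mod int p ^ n)) div int p ^ k"
      unfolding e pk_mod[OF assms(1)] ..
    also have "\<dots> = (c (n + k) * zp_dv p k x n) mod int p ^ n" using pk by simp
    also have "\<dots> = (c n * zp_dv p k x n) mod int p ^ n"
      using cc by (metis mod_mult_left_eq)
    also have "\<dots> = zp_mul p c (zp_dv p k x) n" by (simp add: zp_mul_def)
    finally show "zp_dv p k (zp_mul p c x) n = zp_mul p c (zp_dv p k x) n" .
  qed
qed

lemma dv_zero_imp:
  assumes "x \<in> Zp p" "x k = 0" "zp_dv p k x m = 0" shows "x (m + k) = 0"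
  using dv_eq[OF assms(1,2), of m] assms(3) by simp

lemma dv_mul_back:
  assumes "p > 0" "x \<in> Zp p" "x k = 0"
  shows "zp_mul p (zp_int p (int p ^ k)) (zp_dv p k x) = x"
proof (rule ext)
  fix n
  have "x n = x (n + k) mod int p ^ n" using Zp_coh[OF assms(2), of n "n + k"] by simp
  also have "\<dots> = (int p ^ k * zp_dv p k x n) mod int p ^ n" using dv_eq[OF assms(2,3)] by simp
  finally show "zp_mul p (zp_int p (int p ^ k)) (zp_dv p k x) n = x n"
    unfolding zp_mul_def zp_int_def by (simp add: mod_simps)
qed

definition zp_inv :: "nat \<Rightarrow> zp \<Rightarrow> zp" where
  "zp_inv p u = (\<lambda>n. SOME z. 0 \<le> z \<and> z < int p ^ n \<and> (u n * z) mod int p ^ n = 1 mod int p ^ n)"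

lemma inv_unique:
  fixes m u z z' :: int
  assumes "0 \<le> z" "z < m" "0 \<le> z'" "z' < m" "(u * z) mod m = 1 mod m" "(u * z') mod m = 1 mod m"
  shows "z = z'"
proof -
  have "(z * (u * z')) mod m = z mod m" using assms(6) by (metis mod_mult_right_eq mult.right_neutral)
  moreover have "(z' * (u * z)) mod m = z' mod m" using assms(5) by (metis mod_mult_right_eq mult.right_neutral)
  moreover have "z * (u * z') = z' * (u * z)" by simp
  ultimately have "z mod m = z' mod m" by simp
  then show ?thesis using assms by simp
qed

lemma unit_ndvd:
  assumes "u \<in> Zp p" "u 1 \<noteq> 0" "n \<ge> 1" shows "\<not> int p dvd u n"
  using zp_ndvd_of_nz[OF assms(1,2,3)] by simp

lemma inv_ex:
  assumes "prime p" "u \<in> Zp p" "u 1 \<noteq> 0"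
  shows "\<exists>z. 0 \<le> z \<and> z < int p ^ n \<and> (u n * z) mod int p ^ n = 1 mod int p ^ n"
proof (cases "n = 0")
  case True then show ?thesis by (intro exI[of _ 0]) simp
next
  case False
  have "\<not> int p dvd u n" using unit_ndvd[OF assms(2,3)] False by simp
  then have "coprime (int p) (u n)" using assms(1) by (intro prime_imp_coprime) auto
  then have "coprime (u n) (int p ^ n)" by (simp add: coprime_commute)
  then obtain s t where st: "s * u n + t * int p ^ n = 1" using bezout_int[of "u n" "int p ^ n"] by auto
  have pos: "int p ^ n > 0" using assms(1) prime_gt_0_nat by simp
  have "(u n * (s mod int p ^ n)) mod int p ^ n = (u n * s) mod int p ^ n" by (simp add: mod_mult_right_eq)
  also have "u n * s = 1 + (- t) * int p ^ n" using st by (simp add: algebra_simps)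
  also have "(1 + (- t) * int p ^ n) mod int p ^ n = 1 mod int p ^ n" by (rule mod_mult_self1)
  finally have "(u n * (s mod int p ^ n)) mod int p ^ n = 1 mod int p ^ n" .
  moreover have "0 \<le> s mod int p ^ n" "s mod int p ^ n < int p ^ n" using pos by auto
  ultimately show ?thesis by blast
qed

lemma inv_prop:
  assumes "prime p" "u \<in> Zp p" "u 1 \<noteq> 0"
  shows "0 \<le> zp_inv p u n \<and> zp_inv p u n < int p ^ n \<and> (u n * zp_inv p u n) mod int p ^ n = 1 mod int p ^ n"
  unfolding zp_inv_def using someI_ex[OF inv_ex[OF assms, of n]] by simp

lemma inv_Zp:
  assumes "prime p" "u \<in> Zp p" "u 1 \<noteq> 0"
  shows "zp_inv p u \<in> Zp p"
proof -
  have c: "zp_inv p u (Suc n) mod int p ^ n = zp_inv p u n" for n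
  proof (rule inv_unique)
    have pos: "int p ^ n > 0" using assms(1) prime_gt_0_nat by simp
    show "0 \<le> zp_inv p u (Suc n) mod int p ^ n" "zp_inv p u (Suc n) mod int p ^ n < int p ^ n" using pos by auto
    show "0 \<le> zp_inv p u n" "zp_inv p u n < int p ^ n" using inv_prop[OF assms] by auto
    show "(u n * zp_inv p u n) mod int p ^ n = 1 mod int p ^ n" using inv_prop[OF assms] by auto
    have h: "(u (Suc n) * zp_inv p u (Suc n)) mod int p ^ Suc n = 1 mod int p ^ Suc n" using inv_prop[OF assms, of "Suc n"] by blast
    have "(u (Suc n) * zp_inv p u (Suc n)) mod int p ^ n = ((u (Suc n) * zp_inv p u (Suc n)) mod int p ^ Suc n) mod int p ^ n"
      by (rule coh_mod[symmetric]) simp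
    also have "\<dots> = (1 mod int p ^ Suc n) mod int p ^ n" unfolding h ..
    also have "\<dots> = 1 mod int p ^ n" by (rule coh_mod) simp
    finally have "(u (Suc n) * zp_inv p u (Suc n)) mod int p ^ n = 1 mod int p ^ n" .
    moreover have "u (Suc n) mod int p ^ n = u n" using assms(2) by (simp add: Zp_def)
    ultimately show "(u n * (zp_inv p u (Suc n) mod int p ^ n)) mod int p ^ n = 1 mod int p ^ n"
      by (metis mod_mult_eq mod_mod_trivial)
  qed
  show ?thesis using c inv_prop[OF assms] by (simp add: Zp_def)
qed

lemma inv_mul:
  assumes "prime p" "u \<in> Zp p" "u 1 \<noteq> 0"
  shows "zp_mul p (zp_inv p u) u = zp_one p"
  unfolding zp_mul_def zp_one_def using inv_prop[OF assms] by (auto simp: mult.commute)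

lemma zp_divide:
  assumes "prime p" "x \<in> Zp p" "y \<in> Zp p" "y m = 0" "y (Suc m) \<noteq> 0" "x m = 0"
  shows "\<exists>l\<in>Zp p. zp_mul p l y = x"
proof -
  have p0: "p > 0" using assms(1) prime_gt_0_nat by blast
  define u where "u = zp_dv p m y"
  have uZ: "u \<in> Zp p" unfolding u_def by (rule dv_Zp[OF p0 assms(3,4)])
  have "y (1 + m) = int p ^ m * u 1" unfolding u_def by (rule dv_eq[OF assms(3,4)])
  then have u1: "u 1 \<noteq> 0" using assms(5) by auto
  define w where "w = zp_dv p m x"
  have wZ: "w \<in> Zp p" unfolding w_def by (rule dv_Zp[OF p0 assms(2,6)])
  define q where "q = zp_int p (int p ^ m)"
  have y: "y = zp_mul p q u" unfolding q_def u_def by (rule dv_mul_back[OF p0 assms(3,4), symmetric])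
  have x: "x = zp_mul p q w" unfolding q_def w_def by (rule dv_mul_back[OF p0 assms(2,6), symmetric])
  define l where "l = zp_mul p w (zp_inv p u)"
  have lZ: "l \<in> Zp p" unfolding l_def by (rule zp_mul_Zp[OF p0 wZ inv_Zp[OF assms(1) uZ u1]])
  have "zp_mul p l y = zp_mul p (zp_mul p q w) (zp_mul p (zp_inv p u) u)"
    unfolding l_def y by (simp only: zpm.assoc zpm.commute zpm.left_commute)
  also have "\<dots> = x" using inv_mul[OF assms(1) uZ u1] x zp_mul_one[OF zp_mul_Zp[OF p0 _ wZ]] zp_int_Zp[OF p0]
    unfolding q_def by simp
  finally show ?thesis using lZ by blast
qed



lemma Vd_iff: "v \<in> Vd p d \<longleftrightarrow> (\<forall>i<d. v i \<in> Zp p) \<and> (\<forall>i\<ge>d. v i = zp_zero)"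
  by (simp add: Vd_def)

lemma vzero_Vd: "p > 0 \<Longrightarrow> vzero \<in> Vd p d"
  by (simp add: Vd_def vzero_def zp_zero_Zp)

lemma vadd_Vd: "p > 0 \<Longrightarrow> u \<in> Vd p d \<Longrightarrow> v \<in> Vd p d \<Longrightarrow> vadd p u v \<in> Vd p d"
  unfolding Vd_def vadd_def by (auto simp: zp_add_Zp) (simp add: zp_add_def zp_zero_def)

lemma vsmul_Vd: "p > 0 \<Longrightarrow> c \<in> Zp p \<Longrightarrow> v \<in> Vd p d \<Longrightarrow> vsmul p c v \<in> Vd p d"
  unfolding Vd_def vsmul_def by (auto simp: zp_mul_Zp zp_mul_zero)

lemma vsub_Vd: "p > 0 \<Longrightarrow> u \<in> Vd p d \<Longrightarrow> v \<in> Vd p d \<Longrightarrow> vsub p u v \<in> Vd p d"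
  unfolding Vd_def vsub_def by (auto simp: zp_add_Zp zp_neg_Zp) (simp add: zp_add_def zp_neg_def zp_zero_def)

lemma Vd_mod: "v \<in> Vd p d \<Longrightarrow> v i n mod int p ^ n = v i n"
  unfolding Vd_def by (cases "i < d") (auto simp: Zp_mod zp_zero_def)

lemma Vd_eqI: "u \<in> Vd p d \<Longrightarrow> v \<in> Vd p d \<Longrightarrow> (\<And>i n. u i n mod int p ^ n = v i n mod int p ^ n) \<Longrightarrow> u = v"
  by (intro ext) (metis Vd_mod)

lemma vsub_as_smul: "vsub p u v = vadd p u (vsmul p (zp_int p (-1)) v)"
  unfolding vsub_def vadd_def vsmul_def zp_add_def zp_neg_def zp_mul_def zp_int_def
  by (intro ext) (simp add: mod_simps)

lemma submod_vsub: "p > 0 \<Longrightarrow> submod p d S \<Longrightarrow> u \<in> S \<Longrightarrow> v \<in> S \<Longrightarrow> vsub p u v \<in> S"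
  unfolding vsub_as_smul submod_def using zp_int_Zp by blast

lemma vadd_vsub: "v \<in> Vd p d \<Longrightarrow> vadd p x (vsub p v x) = v"
  unfolding vadd_def vsub_def zp_add_def zp_neg_def
  by (intro ext) (simp add: mod_simps Vd_mod)

lemma vadd_cancel: assumes "u \<in> Vd p d" "v \<in> Vd p d" "vadd p w u = vadd p w v" shows "u = v"
proof (rule Vd_eqI[OF assms(1,2)])
  fix i n
  have "(w i n + u i n) mod int p ^ n = (w i n + v i n) mod int p ^ n"
    using fun_cong[OF fun_cong[OF assms(3), of i], of n] unfolding vadd_def zp_add_def by simp
  then show "u i n mod int p ^ n = v i n mod int p ^ n" by (metis add_diff_cancel_left' mod_diff_left_eq)
qed

lemma Vd_Suc_split: "l \<in> Vd p (Suc r) \<Longrightarrow> l 0 \<in> Zp p \<and> (l \<circ> Suc) \<in> Vd p r"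
  unfolding Vd_def by auto

lemma Vd_Suc_join: "c \<in> Zp p \<Longrightarrow> m \<in> Vd p r \<Longrightarrow> case_nat c m \<in> Vd p (Suc r)"
  unfolding Vd_def by (auto split: nat.splits)

lemma Vd_0: "Vd p 0 = {vzero}"
  unfolding Vd_def vzero_def by auto

definition lc :: "nat \<Rightarrow> zvec list \<Rightarrow> zvec \<Rightarrow> zvec" where
  "lc p bs l = (\<lambda>i n. (\<Sum>t<length bs. l t n * (bs ! t) i n) mod int p ^ n)"

lemma sum_mod_cong: "(\<And>t. t \<in> A \<Longrightarrow> f t mod (m::int) = g t mod m) \<Longrightarrow> (\<Sum>t\<in>A. f t) mod m = (\<Sum>t\<in>A. g t) mod m"
  by (metis (no_types, lifting) mod_sum_eq sum.cong)

lemma lc_Vd: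
  assumes "p > 0" "set bs \<subseteq> Vd p d" "\<And>t. t < length bs \<Longrightarrow> l t \<in> Zp p"
  shows "lc p bs l \<in> Vd p d"
  unfolding Vd_iff
proof safe
  fix i assume "i < d"
  have "(\<Sum>t<length bs. l t (Suc n) * (bs ! t) i (Suc n)) mod int p ^ n =
        (\<Sum>t<length bs. l t n * (bs ! t) i n) mod int p ^ n" for n
  proof (rule sum_mod_cong)
    fix t assume "t \<in> {..<length bs}"
    then have "bs ! t \<in> Vd p d" using assms(2) by auto
    then have "l t \<in> Zp p" "(bs ! t) i \<in> Zp p" using assms(3) \<open>i < d\<close> \<open>t \<in> {..<length bs}\<close> by (auto simp: Vd_def)
    then have "l t (Suc n) mod int p ^ n = l t n" "(bs ! t) i (Suc n) mod int p ^ n = (bs ! t) i n"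
      by (auto simp: Zp_def)
    then show "l t (Suc n) * (bs ! t) i (Suc n) mod int p ^ n = l t n * (bs ! t) i n mod int p ^ n"
      by (metis mod_mult_eq)
  qed
  then show "lc p bs l i \<in> Zp p" unfolding lc_def by (intro Zp_intro[OF assms(1)])
next
  fix i assume "d \<le> i"
  have "(bs ! t) i = zp_zero" if "t < length bs" for t
  proof -
    have "bs ! t \<in> Vd p d" using assms(2) that by auto
    then show ?thesis using \<open>d \<le> i\<close> by (auto simp: Vd_def)
  qed
  then show "lc p bs l i = zp_zero" unfolding lc_def by (auto simp: zp_zero_def)
qed

lemma lc_Nil: "lc p [] l = vzero"
  unfolding lc_def vzero_def zp_zero_def by simp

lemma lc_Cons: "lc p (s # bs) l = vadd p (vsmul p (l 0) s) (lc p bs (l \<circ> Suc))"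
  unfolding lc_def vadd_def vsmul_def zp_add_def zp_mul_def
  apply (intro ext)
  apply (subst length_Cons)
  apply (subst sum.lessThan_Suc_shift)
  apply (simp add: mod_simps)
  done

lemma lc_coord_zero:
  assumes "\<And>t. t < length bs \<Longrightarrow> (bs ! t) j = zp_zero"
  shows "lc p bs l j = zp_zero"
  using assms unfolding lc_def zp_zero_def by (intro ext) simp

lemma lc_vadd: "lc p bs (vadd p l m) = vadd p (lc p bs l) (lc p bs m)"
proof (intro ext)
  fix i n
  have "(\<Sum>t<length bs. vadd p l m t n * (bs ! t) i n) mod int p ^ n
      = (\<Sum>t<length bs. (l t n + m t n) * (bs ! t) i n) mod int p ^ n"
    by (rule sum_mod_cong) (simp add: vadd_def zp_add_def mod_simps)
  then show "lc p bs (vadd p l m) i n = vadd p (lc p bs l) (lc p bs m) i n"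
    unfolding lc_def vadd_def zp_add_def by (simp add: mod_simps distrib_right sum.distrib)
qed

lemma lc_vsmul: "lc p bs (vsmul p c l) = vsmul p c (lc p bs l)"
proof (intro ext)
  fix i n
  have "(\<Sum>t<length bs. vsmul p c l t n * (bs ! t) i n) mod int p ^ n
      = (\<Sum>t<length bs. c n * (l t n * (bs ! t) i n)) mod int p ^ n"
    by (rule sum_mod_cong) (simp add: vsmul_def zp_mul_def mod_simps ac_simps)
  then show "lc p bs (vsmul p c l) i n = vsmul p c (lc p bs l) i n"
    unfolding lc_def vsmul_def zp_mul_def by (simp add: mod_simps sum_distrib_left)
qed

lemma lc_vsub: "lc p bs (vsub p l m) = vsub p (lc p bs l) (lc p bs m)"
  unfolding vsub_as_smul lc_vadd lc_vsmul ..

lemma lc_vzero: "lc p bs vzero = vzero"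
  unfolding lc_def vzero_def zp_zero_def by simp



lemma submod_Vd: "submod p d S \<Longrightarrow> v \<in> S \<Longrightarrow> v \<in> Vd p d"
  unfolding submod_def by auto

lemma basis_step:
  assumes pr: "prime p" and S: "submod p d S" and sS: "s \<in> S"
    and sm: "s j m = 0" and sm1: "s j (Suc m) \<noteq> 0" and allm: "\<forall>v\<in>S. v j m = 0"
    and bs: "set bs \<subseteq> {v\<in>S. v j = zp_zero}" "bij_betw (lc p bs) (Vd p (length bs)) {v\<in>S. v j = zp_zero}"
    and jd: "j < d"
  shows "bij_betw (lc p (s # bs)) (Vd p (length (s # bs))) S"
proof -
  have p0: "p > 0" using pr prime_gt_0_nat by blast
  let ?S' = "{v\<in>S. v j = zp_zero}"
  have sV: "s \<in> Vd p d" using S sS by (rule submod_Vd)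
  have sjZ: "s j \<in> Zp p" using sV jd by (simp add: Vd_def)
  have sjnz: "s j \<noteq> zp_zero" using sm1 by (auto simp: zp_zero_def)
  have bsV: "set bs \<subseteq> Vd p d" using bs(1) S by (auto dest: submod_Vd)
  have lcj: "lc p bs l j = zp_zero" for l
    by (rule lc_coord_zero) (use bs(1) in \<open>auto dest: nth_mem\<close>)
  have lcV: "lc p bs l \<in> Vd p d" if "l \<in> Vd p (length bs)" for l
    using bij_betw_apply[OF bs(2) that] S by (auto dest: submod_Vd)
  have into: "lc p (s # bs) l \<in> S" if "l \<in> Vd p (Suc (length bs))" for l
  proof -
    have "l 0 \<in> Zp p" "(l \<circ> Suc) \<in> Vd p (length bs)" using Vd_Suc_split[OF that] by auto
    then show ?thesis unfolding lc_Cons using S sS bij_betw_apply[OF bs(2)] unfolding submod_def by blast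
  qed
  have inj: "inj_on (lc p (s # bs)) (Vd p (Suc (length bs)))"
  proof (rule inj_onI)
    fix l l' assume l: "l \<in> Vd p (Suc (length bs))" and l': "l' \<in> Vd p (Suc (length bs))"
      and eq: "lc p (s # bs) l = lc p (s # bs) l'"
    have l0: "l 0 \<in> Zp p" "(l \<circ> Suc) \<in> Vd p (length bs)" using Vd_Suc_split[OF l] by auto
    have l0': "l' 0 \<in> Zp p" "(l' \<circ> Suc) \<in> Vd p (length bs)" using Vd_Suc_split[OF l'] by auto
    have "lc p (s # bs) l j = zp_mul p (l 0) (s j)" if "l 0 \<in> Zp p" for l
    proof -
      have "lc p (s # bs) l j = zp_add p (zp_mul p (l 0) (s j)) zp_zero"
        unfolding lc_Cons vadd_def vsmul_def lcj ..
      also have "\<dots> = zp_mul p (l 0) (s j)" using zp_add_zero[OF zp_mul_Zp[OF p0 that sjZ]] .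
      finally show ?thesis .
    qed
    then have "zp_mul p (l 0) (s j) = zp_mul p (l' 0) (s j)" using eq l0(1) l0'(1) by metis
    then have e0: "l 0 = l' 0" using zp_cancel[OF pr l0(1) l0'(1) sjZ sjnz] by blast
    have "lc p bs (l \<circ> Suc) = lc p bs (l' \<circ> Suc)"
      using eq unfolding lc_Cons e0 by (rule vadd_cancel[OF lcV[OF l0(2)] lcV[OF l0'(2)]])
    then have "l \<circ> Suc = l' \<circ> Suc" using bij_betw_imp_inj_on[OF bs(2)] l0(2) l0'(2) by (auto dest: inj_onD)
    then have hs: "\<And>i'. l (Suc i') = l' (Suc i')" by (metis comp_apply)
    show "l = l'"
    proof (rule ext)
      fix i show "l i = l' i" using e0 hs by (cases i) auto
    qed
  qed
  have onto: "S \<subseteq> lc p (s # bs) ` Vd p (Suc (length bs))"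
  proof
    fix v assume vS: "v \<in> S"
    have vV: "v \<in> Vd p d" using S vS by (rule submod_Vd)
    have vjZ: "v j \<in> Zp p" using vV jd by (simp add: Vd_def)
    obtain c where cZ: "c \<in> Zp p" and c: "zp_mul p c (s j) = v j"
      using zp_divide[OF pr vjZ sjZ sm sm1] allm vS by blast
    define w where "w = vsub p v (vsmul p c s)"
    have wS: "w \<in> S" unfolding w_def using S vS sS cZ p0 by (intro submod_vsub) (auto simp: submod_def)
    have "w j = zp_add p (v j) (zp_neg p (v j))" unfolding w_def vsub_def vsmul_def c ..
    then have "w j = zp_zero" by (simp add: zp_add_neg)
    then have "w \<in> ?S'" using wS by simp
    then have "w \<in> lc p bs ` Vd p (length bs)" using bs(2) unfolding bij_betw_def by simp
    then obtain mu where mu: "mu \<in> Vd p (length bs)" "lc p bs mu = w" by (auto simp del: Collect_mem_eq)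
    have "lc p (s # bs) (case_nat c mu) = vadd p (vsmul p c s) w"
      unfolding lc_Cons by (simp add: mu(2) comp_def)
    also have "\<dots> = v" unfolding w_def by (rule vadd_vsub[OF vV])
    finally show "v \<in> lc p (s # bs) ` Vd p (Suc (length bs))"
      using Vd_Suc_join[OF cZ mu(1)] by (metis image_eqI)
  qed
  show ?thesis unfolding bij_betw_def using inj into onto by auto
qed



lemma submod_restrict:
  assumes "submod p d S" shows "submod p d {v\<in>S. v j = zp_zero}"
  using assms unfolding submod_def
  by (auto simp: vzero_def vadd_def vsmul_def zp_mul_zero) (simp add: zp_add_def zp_zero_def)

lemma basis_gen:
  assumes pr: "prime p"
  shows "d - j = N \<Longrightarrow> submod p d S \<Longrightarrow> (\<forall>v\<in>S. \<forall>i<j. v i = zp_zero) \<Longrightarrow>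
    \<exists>bs. set bs \<subseteq> S \<and> bij_betw (lc p bs) (Vd p (length bs)) S \<and>
        (\<forall>t. 1 \<le> t \<and> t < length bs \<longrightarrow> (bs ! t) j = zp_zero)"
proof (induction N arbitrary: j S)
  case 0
  have p0: "p > 0" using pr prime_gt_0_nat by blast
  have "S = {vzero}"
  proof
    show "S \<subseteq> {vzero}"
    proof
      fix v assume vS: "v \<in> S"
      then have "v \<in> Vd p d" using 0 by (auto dest: submod_Vd)
      then have "v i = zp_zero" for i using 0 vS by (cases "i < j") (auto simp: Vd_def)
      then show "v \<in> {vzero}" by (auto simp: vzero_def)
    qed
    show "{vzero} \<subseteq> S" using 0 by (auto simp: submod_def)
  qed
  then show ?case
    by (intro exI[of _ "[]"]) (auto simp: lc_Nil Vd_0 bij_betw_def)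
next
  case (Suc N)
  have p0: "p > 0" using pr prime_gt_0_nat by blast
  have jd: "j < d" and N: "d - Suc j = N" using Suc.prems(1) by auto
  show ?case
  proof (cases "\<forall>v\<in>S. v j = zp_zero")
    case True
    have "\<forall>v\<in>S. \<forall>i<Suc j. v i = zp_zero" using True Suc.prems(3) less_Suc_eq by auto
    then obtain bs where bs: "set bs \<subseteq> S" "bij_betw (lc p bs) (Vd p (length bs)) S"
      using Suc.IH[OF N Suc.prems(2)] by blast
    have "(bs ! t) j = zp_zero" if "t < length bs" for t using bs(1) True nth_mem[OF that] by blast
    then show ?thesis using bs by blast
  next
    case False
    then obtain v where vS: "v \<in> S" and vj: "v j \<noteq> zp_zero" by auto
    have vjZ: "v j \<in> Zp p" using submod_Vd[OF Suc.prems(2) vS] jd by (simp add: Vd_def)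
    obtain n where n: "v j n \<noteq> 0" using vj by (auto simp: zp_zero_def)
    have "n \<noteq> 0" proof assume "n = 0" then show False using n Zp_0[OF vjZ] by simp qed
    then obtain n' where n': "n = Suc n'" by (cases n) auto
    have ex: "\<exists>s\<in>S. s j (Suc n') \<noteq> 0" using vS n n' by auto
    define m where "m = (LEAST m. \<exists>s\<in>S. s j (Suc m) \<noteq> 0)"
    obtain s where sS: "s \<in> S" and sm1: "s j (Suc m) \<noteq> 0"
    proof -
      have "\<exists>m. \<exists>s\<in>S. s j (Suc m) \<noteq> 0" using ex by blast
      from LeastI_ex[OF this] show ?thesis using that unfolding m_def by blast
    qed
    have allm: "\<forall>w\<in>S. w j m = 0"
    proof
      fix w assume wS: "w \<in> S"
      have wjZ: "w j \<in> Zp p" using submod_Vd[OF Suc.prems(2) wS] jd by (simp add: Vd_def)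
      show "w j m = 0"
      proof (cases m)
        case 0 then show ?thesis using Zp_0[OF wjZ] by simp
      next
        case (Suc m')
        have "m' < m" using Suc by simp
        then have "\<not> (\<exists>s\<in>S. s j (Suc m') \<noteq> 0)" unfolding m_def by (rule not_less_Least)
        then show ?thesis using wS Suc by auto
      qed
    qed
    let ?S' = "{v\<in>S. v j = zp_zero}"
    have S'sub: "submod p d ?S'" by (rule submod_restrict[OF Suc.prems(2)])
    have "\<forall>v\<in>?S'. \<forall>i<Suc j. v i = zp_zero" using Suc.prems(3) less_Suc_eq by auto
    then obtain bs where bs: "set bs \<subseteq> ?S'" "bij_betw (lc p bs) (Vd p (length bs)) ?S'"
      using Suc.IH[OF N S'sub] by blast
    have bij: "bij_betw (lc p (s # bs)) (Vd p (length (s # bs))) S"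
      by (rule basis_step[OF pr Suc.prems(2) sS _ sm1 allm bs jd]) (use allm sS in blast)
    have "((s # bs) ! t) j = zp_zero" if "1 \<le> t" "t < length (s # bs)" for t
    proof -
      obtain t' where t': "t = Suc t'" using \<open>1 \<le> t\<close> by (cases t) auto
      then have "t' < length bs" using that by simp
      then have "bs ! t' \<in> ?S'" using bs(1) nth_mem by blast
      then show ?thesis using t' by simp
    qed
    then show ?thesis using bij bs(1) sS by (intro exI[of _ "s # bs"]) auto
  qed
qed



lemma quot_bij:
  assumes f: "bij_betw f A B" and R: "R \<subseteq> A \<times> A" and R': "R' \<subseteq> B \<times> B"
    and RR: "\<And>u v. u \<in> A \<Longrightarrow> v \<in> A \<Longrightarrow> (u, v) \<in> R \<longleftrightarrow> (f u, f v) \<in> R'"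
  shows "bij_betw (\<lambda>X. f ` X) (A // R) (B // R')"
proof -
  have inj: "inj_on f A" and im: "f ` A = B" using f by (auto simp: bij_betw_def)
  have cls: "f ` (R `` {x}) = R' `` {f x}" if "x \<in> A" for x
  proof
    show "f ` (R `` {x}) \<subseteq> R' `` {f x}" using RR that R by auto
    show "R' `` {f x} \<subseteq> f ` (R `` {x})"
    proof
      fix y assume "y \<in> R' `` {f x}"
      then have "(f x, y) \<in> R'" by simp
      then have "y \<in> B" using R' by auto
      then obtain z where z: "z \<in> A" "y = f z" using im by auto
      then have "(x, z) \<in> R" using RR[OF that z(1)] \<open>(f x, y) \<in> R'\<close> by simp
      then show "y \<in> f ` (R `` {x})" using z by auto
    qed
  qed
  have "(\<lambda>X. f ` X) ` (A // R) = B // R'"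
    unfolding quotient_def using cls im by auto
  moreover have "inj_on (\<lambda>X. f ` X) (A // R)"
  proof (rule inj_onI)
    fix X Y assume "X \<in> A // R" "Y \<in> A // R" "f ` X = f ` Y"
    moreover have "X \<subseteq> A" "Y \<subseteq> A" using calculation(1,2) R unfolding quotient_def by auto
    ultimately show "X = Y" using inj_on_image_eq_iff[OF inj] by blast
  qed
  ultimately show ?thesis unfolding bij_betw_def by simp
qed

lemma transfer:
  assumes p0: "p > 0"
    and f: "bij_betw f (Vd p r) S"
    and S: "S \<subseteq> Vd p d"
    and fadd: "\<And>x y. x \<in> Vd p r \<Longrightarrow> y \<in> Vd p r \<Longrightarrow> f (vadd p x y) = vadd p (f x) (f y)"
    and fsmul: "\<And>c x. c \<in> Zp p \<Longrightarrow> x \<in> Vd p r \<Longrightarrow> f (vsmul p c x) = vsmul p c (f x)"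
    and fsub: "\<And>x y. x \<in> Vd p r \<Longrightarrow> y \<in> Vd p r \<Longrightarrow> f (vsub p x y) = vsub p (f x) (f y)"
    and fbr: "\<And>x y. x \<in> Vd p r \<Longrightarrow> y \<in> Vd p r \<Longrightarrow> f (br' x y) = br (f x) (f y)"
    and f0: "f vzero = vzero"
    and brc: "\<And>x y. x \<in> Vd p r \<Longrightarrow> y \<in> Vd p r \<Longrightarrow> br' x y \<in> Vd p r"
    and ss: "self_similar p r br' (Vd p r) k"
  shows "self_similar p d br S k"
proof -
  let ?H = "Vd p r"
  obtain M0 \<phi>0 where ve: "virt_endo p r br' ?H M0 \<phi>0" and idx: "lat_index p ?H M0 = p ^ k"
    and sim: "simple_ve p r br' ?H M0 \<phi>0"
    using ss unfolding self_similar_def by blast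
  have sub0: "subalg p r br' ?H M0" and fi0: "finite_index p ?H M0" and im0: "\<phi>0 ` M0 \<subseteq> ?H"
    and add0: "\<forall>u\<in>M0. \<forall>v\<in>M0. \<phi>0 (vadd p u v) = vadd p (\<phi>0 u) (\<phi>0 v)"
    and smul0: "\<forall>c\<in>Zp p. \<forall>u\<in>M0. \<phi>0 (vsmul p c u) = vsmul p c (\<phi>0 u)"
    and br0: "\<forall>u\<in>M0. \<forall>v\<in>M0. \<phi>0 (br' u v) = br' (\<phi>0 u) (\<phi>0 v)"
    using ve unfolding virt_endo_def by auto
  have M0H: "M0 \<subseteq> ?H" using sub0 unfolding subalg_def by auto
  have M0sub: "submod p r M0" using sub0 unfolding subalg_def by auto
  have inj: "inj_on f ?H" and imf: "f ` ?H = S" using f by (auto simp: bij_betw_def)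
  define g where "g = inv_into ?H f"
  have gf: "g (f x) = x" if "x \<in> ?H" for x unfolding g_def using inv_into_f_f[OF inj that] .
  define M where "M = f ` M0"
  define \<phi> where "\<phi> = (\<lambda>x. f (\<phi>0 (g x)))"
  have \<phi>f: "\<phi> (f x) = f (\<phi>0 x)" if "x \<in> ?H" for x unfolding \<phi>_def gf[OF that] ..
  have fM: "f x \<in> M \<longleftrightarrow> x \<in> M0" if "x \<in> ?H" for x
    unfolding M_def using inj_on_image_mem_iff[OF inj that M0H] .
  have MS: "M \<subseteq> S" unfolding M_def using M0H imf by auto
  have subM: "subalg p d br S M"
    unfolding subalg_def submod_def
  proof (intro conjI ballI)
    show "M \<subseteq> Vd p d" using MS S by auto
    show "vzero \<in> M" using M0sub f0 unfolding M_def submod_def by force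
    show "M \<subseteq> S" by (rule MS)
  next
    fix u v assume "u \<in> M" "v \<in> M"
    then obtain x y where xy: "x \<in> M0" "y \<in> M0" "u = f x" "v = f y" unfolding M_def by auto
    then have xyH: "x \<in> ?H" "y \<in> ?H" using M0H by auto
    have "vadd p x y \<in> M0" using xy M0sub unfolding submod_def by auto
    then show "vadd p u v \<in> M" unfolding M_def xy fadd[OF xyH, symmetric] by blast
    have "br' x y \<in> M0" using xy sub0 unfolding subalg_def by auto
    then show "br u v \<in> M" unfolding M_def xy fbr[OF xyH, symmetric] by blast
  next
    fix c u assume "c \<in> Zp p" "u \<in> M"
    then obtain x where x: "x \<in> M0" "u = f x" unfolding M_def by auto
    have "vsmul p c x \<in> M0" using x M0sub \<open>c \<in> Zp p\<close> unfolding submod_def by auto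
    then show "vsmul p c u \<in> M" unfolding M_def x fsmul[OF \<open>c \<in> Zp p\<close> M0H[THEN subsetD, OF x(1)], symmetric] by blast
  qed
  let ?R = "{(u, v). u \<in> ?H \<and> v \<in> ?H \<and> vsub p u v \<in> M0}"
  let ?R' = "{(u, v). u \<in> S \<and> v \<in> S \<and> vsub p u v \<in> M}"
  have qb: "bij_betw (\<lambda>X. f ` X) (?H // ?R) (S // ?R')"
  proof (rule quot_bij[OF f])
    fix u v assume uv: "u \<in> ?H" "v \<in> ?H"
    have sH: "vsub p u v \<in> ?H" using vsub_Vd[OF p0 uv] .
    have "f u \<in> S" "f v \<in> S" using uv imf by auto
    moreover have "vsub p (f u) (f v) \<in> M \<longleftrightarrow> vsub p u v \<in> M0" using fM[OF sH] fsub[OF uv] by simp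
    ultimately show "(u, v) \<in> ?R \<longleftrightarrow> (f u, f v) \<in> ?R'" using uv by simp
  qed auto
  have fiM: "finite_index p S M" using fi0 bij_betw_finite[OF qb] unfolding finite_index_def by simp
  have idxM: "lat_index p S M = p ^ k" using idx bij_betw_same_card[OF qb] unfolding lat_index_def by simp
  have veM: "virt_endo p d br S M \<phi>"
    unfolding virt_endo_def
  proof (intro conjI ballI subM fiM)
    show "\<phi> ` M \<subseteq> S"
    proof
      fix z assume "z \<in> \<phi> ` M"
      then obtain x where x: "x \<in> M0" "z = \<phi> (f x)" unfolding M_def by auto
      then have "z = f (\<phi>0 x)" using \<phi>f M0H by auto
      moreover have "\<phi>0 x \<in> ?H" using im0 x by auto
      ultimately show "z \<in> S" using imf by auto
    qed
  next
    fix u v assume "u \<in> M" "v \<in> M"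
    then obtain x y where xy: "x \<in> M0" "y \<in> M0" "u = f x" "v = f y" unfolding M_def by auto
    then have xyH: "x \<in> ?H" "y \<in> ?H" using M0H by auto
    have s1: "vadd p x y \<in> M0" using xy M0sub unfolding submod_def by auto
    have s2: "br' x y \<in> M0" using xy sub0 unfolding subalg_def by auto
    have pH: "\<phi>0 x \<in> ?H" "\<phi>0 y \<in> ?H" using im0 xy by auto
    show "\<phi> (vadd p u v) = vadd p (\<phi> u) (\<phi> v)"
      unfolding xy fadd[OF xyH, symmetric] \<phi>f[OF M0H[THEN subsetD, OF s1]] \<phi>f[OF xyH(1)] \<phi>f[OF xyH(2)]
      using add0 xy fadd[OF pH] by simp
    show "\<phi> (br u v) = br (\<phi> u) (\<phi> v)"
      unfolding xy fbr[OF xyH, symmetric] \<phi>f[OF M0H[THEN subsetD, OF s2]] \<phi>f[OF xyH(1)] \<phi>f[OF xyH(2)]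
      using br0 xy fbr[OF pH] by simp
  next
    fix c u assume c: "c \<in> Zp p" and "u \<in> M"
    then obtain x where x: "x \<in> M0" "u = f x" unfolding M_def by auto
    then have xH: "x \<in> ?H" using M0H by auto
    have s1: "vsmul p c x \<in> M0" using x c M0sub unfolding submod_def by auto
    have pH: "\<phi>0 x \<in> ?H" using im0 x by auto
    show "\<phi> (vsmul p c u) = vsmul p c (\<phi> u)"
      unfolding x fsmul[OF c xH, symmetric] \<phi>f[OF M0H[THEN subsetD, OF s1]] \<phi>f[OF xH]
      using smul0 x c fsmul[OF c pH] by simp
  qed
  have pd: "f x \<in> pow_dom S M \<phi> n \<longleftrightarrow> x \<in> pow_dom ?H M0 \<phi>0 n" if "x \<in> ?H" for x n
    using that
  proof (induction n arbitrary: x)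
    case 0 then show ?case using imf by auto
  next
    case (Suc n)
    show ?case
    proof (cases "x \<in> M0")
      case True
      have "\<phi>0 x \<in> ?H" using im0 True by auto
      then show ?thesis using Suc.IH[of "\<phi>0 x"] \<phi>f[OF Suc.prems] fM[OF Suc.prems] True by simp
    next
      case False then show ?thesis using fM[OF Suc.prems] by simp
    qed
  qed
  have simM: "simple_ve p d br S M \<phi>"
    unfolding simple_ve_def
  proof (intro allI impI notI)
    fix I assume I: "lie_ideal p d br S I \<and> I \<noteq> {vzero}" and inv: "phi_invariant S M \<phi> I"
    have Isub: "submod p d I" and IS: "I \<subseteq> S" and Ibr: "\<forall>h\<in>S. \<forall>x\<in>I. br h x \<in> I"
      using I unfolding lie_ideal_def by auto
    have Ipd: "\<And>n. I \<subseteq> pow_dom S M \<phi> n" and Iphi: "\<phi> ` I \<subseteq> I"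
      using inv unfolding phi_invariant_def by auto
    define J where "J = {x \<in> ?H. f x \<in> I}"
    have JH: "J \<subseteq> ?H" unfolding J_def by auto
    have Jid: "lie_ideal p r br' ?H J"
      unfolding lie_ideal_def submod_def
    proof (intro conjI ballI JH)
      show "vzero \<in> J" unfolding J_def using f0 Isub vzero_Vd[OF p0] unfolding submod_def by auto
    next
      fix u v assume "u \<in> J" "v \<in> J"
      then show "vadd p u v \<in> J" using fadd Isub vadd_Vd[OF p0] unfolding J_def submod_def by auto
    next
      fix c u assume "c \<in> Zp p" "u \<in> J"
      then show "vsmul p c u \<in> J" using fsmul Isub vsmul_Vd[OF p0] unfolding J_def submod_def by auto
    next
      fix h u assume "h \<in> ?H" "u \<in> J"
      then show "br' h u \<in> J" using fbr brc Ibr imf unfolding J_def by auto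
    qed
    have "J \<noteq> {vzero}"
    proof
      assume J0: "J = {vzero}"
      obtain y where y: "y \<in> I" "y \<noteq> vzero" using I Isub unfolding submod_def by auto
      then obtain x where x: "x \<in> ?H" "y = f x" using IS imf by auto
      then have "x \<in> J" using y unfolding J_def by auto
      then show False using J0 x y f0 by auto
    qed
    moreover have "phi_invariant ?H M0 \<phi>0 J"
      unfolding phi_invariant_def
    proof (intro conjI allI subsetI)
      fix n x assume "x \<in> J"
      then show "x \<in> pow_dom ?H M0 \<phi>0 n" using pd Ipd unfolding J_def by auto
    next
      fix y assume "y \<in> \<phi>0 ` J"
      then obtain x where x: "x \<in> J" "y = \<phi>0 x" by auto
      have xH: "x \<in> ?H" using x JH by auto
      have "f x \<in> pow_dom S M \<phi> 1" using Ipd[of 1] x unfolding J_def by blast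
      then have "f x \<in> M" by simp
      then have xM: "x \<in> M0" using fM[OF xH] by simp
      have "\<phi> (f x) \<in> I" using Iphi x unfolding J_def by auto
      then show "y \<in> J" using \<phi>f[OF xH] im0 xM x unfolding J_def by auto
    qed
    ultimately show False using sim Jid unfolding simple_ve_def by blast
  qed
  show ?thesis unfolding self_similar_def using veM idxM simM by blast
qed



definition phi0 :: "nat \<Rightarrow> nat \<Rightarrow> nat \<Rightarrow> nat \<Rightarrow> zvec \<Rightarrow> zvec" where
  "phi0 p r k j0 v = (\<lambda>i. if i < j0 then v i else if Suc i < r then v (Suc i)
      else if Suc i = r then zp_dv p k (v j0) else zp_zero)"

definition MM :: "nat \<Rightarrow> nat \<Rightarrow> nat \<Rightarrow> nat \<Rightarrow> zvec set" where
  "MM p r k j0 = {v \<in> Vd p r. v j0 k = 0}"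

lemma MM_submod:
  assumes "p > 0" "j0 < r" shows "submod p r (MM p r k j0)"
  unfolding submod_def MM_def
proof (intro conjI ballI)
  show "{v \<in> Vd p r. v j0 k = 0} \<subseteq> Vd p r" by auto
  show "vzero \<in> {v \<in> Vd p r. v j0 k = 0}" using vzero_Vd[OF assms(1)] by (simp add: vzero_def zp_zero_def)
next
  fix u v assume "u \<in> {v \<in> Vd p r. v j0 k = 0}" "v \<in> {v \<in> Vd p r. v j0 k = 0}"
  then show "vadd p u v \<in> {v \<in> Vd p r. v j0 k = 0}" using vadd_Vd[OF assms(1)] by (simp add: vadd_def zp_add_def)
next
  fix c u assume "c \<in> Zp p" "u \<in> {v \<in> Vd p r. v j0 k = 0}"
  then show "vsmul p c u \<in> {v \<in> Vd p r. v j0 k = 0}" using vsmul_Vd[OF assms(1)] by (simp add: vsmul_def zp_mul_def)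
qed

lemma phi0_Vd:
  assumes "p > 0" "j0 < r" "v \<in> MM p r k j0" shows "phi0 p r k j0 v \<in> Vd p r"
proof -
  have vV: "v \<in> Vd p r" and vk: "v j0 k = 0" using assms(3) by (auto simp: MM_def)
  have vj: "v j0 \<in> Zp p" using vV assms(2) by (auto simp: Vd_def)
  show ?thesis using vV dv_Zp[OF assms(1) vj vk] unfolding Vd_def phi0_def by auto
qed

lemma phi0_add:
  assumes "p > 0" "j0 < r" "u \<in> MM p r k j0" "v \<in> MM p r k j0"
  shows "phi0 p r k j0 (vadd p u v) = vadd p (phi0 p r k j0 u) (phi0 p r k j0 v)"
proof -
  have uV: "u \<in> Vd p r" and uk: "u j0 k = 0" using assms(3) by (auto simp: MM_def)
  have vV: "v \<in> Vd p r" and vk: "v j0 k = 0" using assms(4) by (auto simp: MM_def)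
  have uj: "u j0 \<in> Zp p" "v j0 \<in> Zp p" using uV vV assms(2) by (auto simp: Vd_def)
  show ?thesis unfolding phi0_def
    by (intro ext) (auto simp: dv_add(2)[OF assms(1) uj(1) uk uj(2) vk] vadd_def zp_add_zero[OF zp_zero_Zp[OF assms(1)]])
qed

lemma phi0_smul:
  assumes "p > 0" "j0 < r" "c \<in> Zp p" "v \<in> MM p r k j0"
  shows "phi0 p r k j0 (vsmul p c v) = vsmul p c (phi0 p r k j0 v)"
proof -
  have vV: "v \<in> Vd p r" and vk: "v j0 k = 0" using assms(4) by (auto simp: MM_def)
  have vj: "v j0 \<in> Zp p" using vV assms(2) by (auto simp: Vd_def)
  show ?thesis unfolding phi0_def
    by (intro ext) (auto simp: dv_mul(2)[OF assms(1) vj vk assms(3)] vsmul_def zp_mul_zero)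
qed

lemma phi0_vzero: "phi0 p r k j0 vzero = vzero"
  unfolding phi0_def vzero_def zp_dv_def zp_zero_def by auto

lemma quot_card_fun:
  assumes "R = {(u, v). u \<in> A \<and> v \<in> A \<and> h u = h v}"
  shows "bij_betw (\<lambda>X. the_elem (h ` X)) (A // R) (h ` A)"
proof -
  have cls: "R `` {x} = {y \<in> A. h y = h x}" if "x \<in> A" for x using assms that by auto
  have im: "h ` (R `` {x}) = {h x}" if "x \<in> A" for x using cls[OF that] that by auto
  show ?thesis
    unfolding bij_betw_def
  proof
    show "inj_on (\<lambda>X. the_elem (h ` X)) (A // R)"
    proof (rule inj_onI)
      fix X Y assume "X \<in> A // R" "Y \<in> A // R" "the_elem (h ` X) = the_elem (h ` Y)"
      then obtain x y where "x \<in> A" "y \<in> A" "X = R `` {x}" "Y = R `` {y}" "h x = h y"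
        unfolding quotient_def using im by auto
      then show "X = Y" using cls by auto
    qed
    have "(\<lambda>X. the_elem (h ` X)) ` (A // R) = (\<lambda>x. the_elem (h ` (R `` {x}))) ` A"
      unfolding quotient_def by auto
    also have "\<dots> = h ` A" using im by simp
    finally show "(\<lambda>X. the_elem (h ` X)) ` (A // R) = h ` A" .
  qed
qed

lemma MM_index:
  assumes "p > 0" "j0 < r"
  shows "lat_index p (Vd p r) (MM p r k j0) = p ^ k \<and> finite_index p (Vd p r) (MM p r k j0)"
proof -
  let ?A = "Vd p r"
  let ?h = "\<lambda>v::zvec. v j0 k"
  have R: "{(u, v). u \<in> ?A \<and> v \<in> ?A \<and> vsub p u v \<in> MM p r k j0} = {(u, v). u \<in> ?A \<and> v \<in> ?A \<and> ?h u = ?h v}"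
  proof -
    have "vsub p u v \<in> MM p r k j0 \<longleftrightarrow> u j0 k = v j0 k" if "u \<in> ?A" "v \<in> ?A" for u v
    proof -
      have r: "0 \<le> u j0 k" "u j0 k < int p ^ k" "0 \<le> v j0 k" "v j0 k < int p ^ k"
        using that assms(2) by (auto simp: Vd_def Zp_def)
      have "vsub p u v j0 k = (u j0 k - v j0 k) mod int p ^ k"
        unfolding vsub_def zp_add_def zp_neg_def by (simp add: mod_simps)
      moreover have "(u j0 k - v j0 k) mod int p ^ k = 0 \<longleftrightarrow> u j0 k = v j0 k"
      proof -
        have "(u j0 k - v j0 k) mod int p ^ k = 0 \<longleftrightarrow> u j0 k mod int p ^ k = v j0 k mod int p ^ k"
          by (simp add: mod_eq_0_iff_dvd mod_eq_dvd_iff)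
        then show ?thesis using r by simp
      qed
      ultimately show ?thesis using vsub_Vd[OF assms(1) that] unfolding MM_def by simp
    qed
    then show ?thesis by auto
  qed
  have im: "?h ` ?A = {0..<int p ^ k}"
  proof
    show "?h ` ?A \<subseteq> {0..<int p ^ k}" using assms(2) by (auto simp: Vd_def Zp_def)
    show "{0..<int p ^ k} \<subseteq> ?h ` ?A"
    proof
      fix z assume z: "z \<in> {0..<int p ^ k}"
      define e where "e = (\<lambda>i. if i = j0 then zp_int p z else zp_zero)"
      have "e \<in> ?A" using assms zp_int_Zp zp_zero_Zp unfolding e_def Vd_def by auto
      moreover have "?h e = z" using z unfolding e_def zp_int_def by simp
      ultimately show "z \<in> ?h ` ?A" by force
    qed
  qed
  have b: "bij_betw (\<lambda>X. the_elem (?h ` X)) (?A // {(u, v). u \<in> ?A \<and> v \<in> ?A \<and> ?h u = ?h v}) {0..<int p ^ k}"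
    using quot_card_fun[where A="?A" and h="?h", OF refl] unfolding im .
  have "card {0..<int p ^ k} = p ^ k" by (metis card_atLeastLessThan_int diff_zero nat_int of_nat_power)
  then show ?thesis unfolding lat_index_def finite_index_def R
    using bij_betw_same_card[OF b] bij_betw_finite[OF b] by simp
qed



lemma phi0_iter_low: "i < j0 \<Longrightarrow> (phi0 p r k j0 ^^ t) v i = v i"
  by (induction t) (auto simp: phi0_def)

lemma phi0_iter:
  assumes "t \<le> r - j0" "j0 \<le> i" "i < r"
  shows "(phi0 p r k j0 ^^ t) v i = (if i + t < r then v (i + t) else zp_dv p k (v (i + t - (r - j0))))"
  using assms
proof (induction t arbitrary: i)
  case 0 then show ?case by simp
next
  case (Suc t)
  let ?w = "(phi0 p r k j0 ^^ t) v"
  have "(phi0 p r k j0 ^^ Suc t) v i = phi0 p r k j0 ?w i" by simp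
  show ?case
  proof (cases "Suc i < r")
    case True
    have "phi0 p r k j0 ?w i = ?w (Suc i)" using True Suc.prems by (simp add: phi0_def)
    also have "\<dots> = (if Suc i + t < r then v (Suc i + t) else zp_dv p k (v (Suc i + t - (r - j0))))"
      using Suc.IH[of "Suc i"] Suc.prems True by simp
    finally show ?thesis by simp
  next
    case False
    then have ir: "Suc i = r" using Suc.prems by simp
    have "phi0 p r k j0 ?w i = zp_dv p k (?w j0)" using ir Suc.prems by (simp add: phi0_def)
    have jt: "j0 + t < r" using Suc.prems by linarith
    have "?w j0 = v (j0 + t)" using Suc.IH[of j0] Suc.prems jt by simp
    moreover have "\<not> i + Suc t < r" using ir by simp
    moreover have "i + Suc t - (r - j0) = j0 + t" using ir Suc.prems by linarith
    ultimately show ?thesis using \<open>phi0 p r k j0 ?w i = zp_dv p k (?w j0)\<close> by simp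
  qed
qed

definition DD :: "nat \<Rightarrow> nat \<Rightarrow> nat \<Rightarrow> nat \<Rightarrow> zvec set" where
  "DD p r k j0 = {v. \<forall>n. v \<in> pow_dom (Vd p r) (MM p r k j0) (phi0 p r k j0) n}"

lemma DD_props:
  assumes "v \<in> DD p r k j0"
  shows "v \<in> Vd p r" "v \<in> MM p r k j0" "phi0 p r k j0 v \<in> DD p r k j0"
proof -
  show "v \<in> Vd p r" using assms[unfolded DD_def] by (metis mem_Collect_eq pow_dom.simps(1))
  show "v \<in> MM p r k j0" using assms[unfolded DD_def] by (metis (no_types, lifting) mem_Collect_eq pow_dom.simps(2))
  show "phi0 p r k j0 v \<in> DD p r k j0" unfolding DD_def
  proof (intro CollectI allI)
    fix n have "v \<in> pow_dom (Vd p r) (MM p r k j0) (phi0 p r k j0) (Suc n)" using assms unfolding DD_def by blast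
    then show "phi0 p r k j0 v \<in> pow_dom (Vd p r) (MM p r k j0) (phi0 p r k j0) n" by simp
  qed
qed

lemma DD_iter: "v \<in> DD p r k j0 \<Longrightarrow> (phi0 p r k j0 ^^ t) v \<in> DD p r k j0"
  by (induction t) (auto dest: DD_props(3))

lemma key_claim:
  assumes "p > 0" "j0 < r"
  shows "\<forall>v\<in>DD p r k j0. (\<forall>i<j0. v i = zp_zero) \<longrightarrow> (\<forall>i. j0 \<le> i \<and> i < r \<longrightarrow> v i (k * n) = 0)"
proof (induction n)
  case 0
  show ?case
  proof (intro ballI impI allI)
    fix v i assume "v \<in> DD p r k j0" "j0 \<le> i \<and> i < r"
    then have "v i \<in> Zp p" using DD_props(1) by (auto simp: Vd_def)
    then show "v i (k * 0) = 0" using Zp_0 by simp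
  qed
next
  case (Suc n)
  show ?case
  proof (intro ballI impI allI)
    fix v i assume vD: "v \<in> DD p r k j0" and low: "\<forall>i<j0. v i = zp_zero" and ii: "j0 \<le> i \<and> i < r"
    have vV: "v \<in> Vd p r" using DD_props(1)[OF vD] .
    have ZZ: "v i' \<in> Zp p" if "i' < r" for i' using vV that by (auto simp: Vd_def)
    have kk: "v i' k = 0" if "j0 \<le> i'" "i' < r" for i'
    proof -
      let ?t = "i' - j0"
      have "(phi0 p r k j0 ^^ ?t) v \<in> MM p r k j0" using DD_props(2)[OF DD_iter[OF vD]] .
      then have "(phi0 p r k j0 ^^ ?t) v j0 k = 0" by (simp add: MM_def)
      moreover have "(phi0 p r k j0 ^^ ?t) v j0 = v i'" using phi0_iter[of ?t r j0 j0] that assms(2) by simp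
      ultimately show ?thesis by simp
    qed
    let ?W = "(phi0 p r k j0 ^^ (r - j0)) v"
    have WD: "?W \<in> DD p r k j0" using DD_iter[OF vD] .
    have Wlow: "\<forall>i<j0. ?W i = zp_zero" using low phi0_iter_low by simp
    have Wi0: "?W i = (if i + (r - j0) < r then v (i + (r - j0)) else zp_dv p k (v (i + (r - j0) - (r - j0))))"
      by (rule phi0_iter) (use ii in auto)
    have nlt: "\<not> i + (r - j0) < r" using ii by linarith
    have Wi: "?W i = zp_dv p k (v i)" using Wi0 nlt by (metis add_diff_cancel_right')
    have "?W i (k * n) = 0" using Suc.IH WD Wlow ii by blast
    then have "v i (k * n + k) = 0" using dv_zero_imp[OF ZZ[of i] kk[of i]] ii Wi by simp
    then show "v i (k * Suc n) = 0" by (simp add: algebra_simps)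
  qed
qed

lemma key:
  assumes "p > 0" "j0 < r" "k \<ge> 1" "v \<in> DD p r k j0" "\<forall>i<j0. v i = zp_zero"
  shows "v = vzero"
proof (rule ext)
  fix i
  have vV: "v \<in> Vd p r" using DD_props(1)[OF assms(4)] .
  show "v i = vzero i"
  proof (cases "i < j0")
    case True then show ?thesis using assms(5) by (simp add: vzero_def)
  next
    case False
    show ?thesis
    proof (cases "i < r")
      case True
      have Z: "v i \<in> Zp p" using vV True by (auto simp: Vd_def)
      have "v i m = 0" for m
      proof -
        have "m \<le> k * m" using assms(3) by simp
        then have "v i m = v i (k * m) mod int p ^ m" using Zp_coh[OF Z] by simp
        also have "v i (k * m) = 0" using key_claim[OF assms(1,2)] assms(4,5) False True by auto
        finally show ?thesis by simp
      qed
      then show ?thesis by (auto simp: vzero_def zp_zero_def)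
    next
      case False then show ?thesis using vV by (auto simp: Vd_def vzero_def)
    qed
  qed
qed



lemma lie_ideal_DD:
  assumes "lie_ideal p d br (Vd p r) I" "phi_invariant (Vd p r) (MM p r k j0) (phi0 p r k j0) I"
  shows "I \<subseteq> DD p r k j0"
  using assms(2) unfolding phi_invariant_def DD_def by blast

lemma ss_ab:
  assumes pr: "prime p" and r: "r \<ge> 1" and k: "k \<ge> 1"
    and br0: "\<And>x y. x \<in> Vd p r \<Longrightarrow> y \<in> Vd p r \<Longrightarrow> br x y = vzero"
  shows "self_similar p r br (Vd p r) k"
proof -
  have p0: "p > 0" using pr prime_gt_0_nat by blast
  have j0: "0 < r" using r by simp
  let ?M = "MM p r k 0" and ?f = "phi0 p r k 0"
  have MV: "?M \<subseteq> Vd p r" by (auto simp: MM_def)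
  have sub: "subalg p r br (Vd p r) ?M"
    unfolding subalg_def using MM_submod[OF p0 j0] MV br0 vzero_Vd[OF p0]
    by (auto simp: MM_def vzero_def zp_zero_def)
  have ve: "virt_endo p r br (Vd p r) ?M ?f"
    unfolding virt_endo_def
  proof (intro conjI ballI sub)
    show "finite_index p (Vd p r) ?M" using MM_index[OF p0 j0] by simp
    show "?f ` ?M \<subseteq> Vd p r" using phi0_Vd[OF p0 j0] by auto
  next
    fix u v assume uv: "u \<in> ?M" "v \<in> ?M"
    show "?f (vadd p u v) = vadd p (?f u) (?f v)" by (rule phi0_add[OF p0 j0 uv])
    have "u \<in> Vd p r" "v \<in> Vd p r" using MV uv by auto
    then have "br u v = vzero" by (rule br0)
    moreover have "br (?f u) (?f v) = vzero" using br0 phi0_Vd[OF p0 j0 uv(1)] phi0_Vd[OF p0 j0 uv(2)] by blast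
    ultimately show "?f (br u v) = br (?f u) (?f v)" using phi0_vzero by simp
  next
    fix c u assume "c \<in> Zp p" "u \<in> ?M"
    then show "?f (vsmul p c u) = vsmul p c (?f u)" by (rule phi0_smul[OF p0 j0])
  qed
  have sim: "simple_ve p r br (Vd p r) ?M ?f"
    unfolding simple_ve_def
  proof (intro allI impI notI)
    fix I assume I: "lie_ideal p r br (Vd p r) I \<and> I \<noteq> {vzero}"
      and inv: "phi_invariant (Vd p r) ?M ?f I"
    have ID: "I \<subseteq> DD p r k 0" using lie_ideal_DD I inv by blast
    obtain v where v: "v \<in> I" "v \<noteq> vzero" using I unfolding lie_ideal_def submod_def by auto
    have "v = vzero" by (rule key[OF p0 j0 k]) (use ID v in auto)
    then show False using v by simp
  qed
  show ?thesis unfolding self_similar_def using ve sim MM_index[OF p0 j0] by blast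
qed

lemma Vd_Zp: "p > 0 \<Longrightarrow> v \<in> Vd p r \<Longrightarrow> v i \<in> Zp p"
  unfolding Vd_def by (cases "i < r") (auto simp: zp_zero_Zp)

lemma Ld_br_Vd:
  assumes "p > 0" "c \<in> Zp p" "u \<in> Vd p r" "v \<in> Vd p r"
  shows "Ld_br p c u v \<in> Vd p r"
proof -
  have Z: "u i \<in> Zp p" "v i \<in> Zp p" if "i < r" for i using assms(3,4) that by (auto simp: Vd_def)
  have z: "u i = zp_zero" "v i = zp_zero" if "r \<le> i" for i using assms(3,4) that by (auto simp: Vd_def)
  have u0: "u 0 \<in> Zp p" "v 0 \<in> Zp p" using Vd_Zp[OF assms(1) assms(3)] Vd_Zp[OF assms(1) assms(4)] by auto
  show ?thesis unfolding Vd_def Ld_br_def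
    using Z z u0 assms(1,2)
    by (auto simp: zp_mul_Zp zp_add_Zp zp_neg_Zp zp_zero_Zp zp_mul_zero zp_neg_zero zp_add_zero)
qed

lemma zp_neg_nz: "x \<in> Zp p \<Longrightarrow> x \<noteq> zp_zero \<Longrightarrow> zp_neg p x \<noteq> zp_zero"
proof
  assume x: "x \<in> Zp p" "x \<noteq> zp_zero" and n: "zp_neg p x = zp_zero"
  have "x n = 0" for n
  proof -
    have "(- x n) mod int p ^ n = 0" using fun_cong[OF n, of n] by (simp add: zp_neg_def zp_zero_def)
    then have "int p ^ n dvd x n" by (simp add: mod_eq_0_iff_dvd)
    then have "x n mod int p ^ n = 0" by (simp add: mod_eq_0_iff_dvd)
    then show ?thesis using Zp_mod[OF x(1)] by simp
  qed
  then show False using x(2) by (auto simp: zp_zero_def)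
qed



lemma Ld_br_MM:
  assumes "u \<in> MM p r k 1" "v \<in> MM p r k 1" shows "Ld_br p c u v 1 k = 0"
  using assms unfolding MM_def Ld_br_def zp_mul_def zp_add_def zp_neg_def by simp

lemma phi0_br:
  assumes p0: "p > 0" and r: "r \<ge> 2" and c: "c \<in> Zp p" and u: "u \<in> MM p r k 1" and v: "v \<in> MM p r k 1"
  shows "phi0 p r k 1 (Ld_br p c u v) = Ld_br p c (phi0 p r k 1 u) (phi0 p r k 1 v)"
proof (rule ext)
  fix i
  have uV: "u \<in> Vd p r" and uk: "u 1 k = 0" using u by (auto simp: MM_def)
  have vV: "v \<in> Vd p r" and vk: "v 1 k = 0" using v by (auto simp: MM_def)
  have Z: "u i' \<in> Zp p" "v i' \<in> Zp p" for i' using Vd_Zp[OF p0 uV] Vd_Zp[OF p0 vV] by auto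
  have zZ: "zp_zero \<in> Zp p" using zp_zero_Zp[OF p0] .
  show "phi0 p r k 1 (Ld_br p c u v) i = Ld_br p c (phi0 p r k 1 u) (phi0 p r k 1 v) i"
  proof (cases "i = 0")
    case True then show ?thesis by (simp add: phi0_def Ld_br_def)
  next
    case False
    then have i1: "1 \<le> i" by simp
    consider (a) "Suc i < r" | (b) "Suc i = r" | (c) "Suc i > r" by linarith
    then show ?thesis
    proof cases
      case a then show ?thesis using i1 by (simp add: phi0_def Ld_br_def)
    next
      case b
      let ?A = "zp_mul p (u 0) (v 1)" and ?B = "zp_mul p (v 0) (u 1)"
      have AZ: "?A \<in> Zp p" "?B \<in> Zp p" using zp_mul_Zp[OF p0] Z by auto
      have Ak: "?A k = 0" "?B k = 0" using dv_mul(1)[OF p0 Z(2) vk Z(1)] dv_mul(1)[OF p0 Z(1) uk Z(2)] by auto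
      have nB: "zp_neg p ?B \<in> Zp p" "zp_neg p ?B k = 0" using zp_neg_Zp[OF p0 AZ(2)] dv_neg(1)[OF p0 AZ(2) Ak(2)] by auto
      let ?X = "zp_add p ?A (zp_neg p ?B)"
      have XZ: "?X \<in> Zp p" "?X k = 0" using zp_add_Zp[OF p0 AZ(1) nB(1)] dv_add(1)[OF p0 AZ(1) Ak(1) nB] by auto
      have "zp_dv p k (zp_mul p c ?X) = zp_mul p c (zp_dv p k ?X)" by (rule dv_mul(2)[OF p0 XZ c])
      also have "zp_dv p k ?X = zp_add p (zp_dv p k ?A) (zp_dv p k (zp_neg p ?B))" by (rule dv_add(2)[OF p0 AZ(1) Ak(1) nB])
      also have "zp_dv p k (zp_neg p ?B) = zp_neg p (zp_dv p k ?B)" by (rule dv_neg(2)[OF p0 AZ(2) Ak(2)])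
      also have "zp_dv p k ?A = zp_mul p (u 0) (zp_dv p k (v 1))" by (rule dv_mul(2)[OF p0 Z(2) vk Z(1)])
      also have "zp_dv p k ?B = zp_mul p (v 0) (zp_dv p k (u 1))" by (rule dv_mul(2)[OF p0 Z(1) uk Z(2)])
      finally have e: "zp_dv p k (zp_mul p c ?X) = zp_mul p c (zp_add p (zp_mul p (u 0) (zp_dv p k (v 1))) (zp_neg p (zp_mul p (v 0) (zp_dv p k (u 1)))))" .
      show ?thesis using b i1 e by (simp add: phi0_def Ld_br_def)
    next
      case c
      have "Ld_br p c (phi0 p r k 1 u) (phi0 p r k 1 v) i = zp_zero"
        using c i1 by (simp add: phi0_def Ld_br_def zp_mul_zero zp_neg_zero zp_add_zero[OF zZ])
      then show ?thesis using c i1 by (simp add: phi0_def)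
    qed
  qed
qed

lemma ss_na:
  assumes pr: "prime p" and r: "r \<ge> 2" and k: "k \<ge> 1" and c: "c \<in> Zp p" and cnz: "c \<noteq> zp_zero"
  shows "self_similar p r (Ld_br p c) (Vd p r) k"
proof -
  have p0: "p > 0" using pr prime_gt_0_nat by blast
  have j0: "1 < r" using r by simp
  let ?M = "MM p r k 1" and ?f = "phi0 p r k 1" and ?br = "Ld_br p c"
  have MV: "?M \<subseteq> Vd p r" by (auto simp: MM_def)
  have sub: "subalg p r ?br (Vd p r) ?M"
    unfolding subalg_def
  proof (intro conjI ballI MM_submod[OF p0 j0] MV)
    fix u v assume "u \<in> ?M" "v \<in> ?M"
    then show "?br u v \<in> ?M" using Ld_br_Vd[OF p0 c] MV Ld_br_MM unfolding MM_def by auto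
  qed
  have ve: "virt_endo p r ?br (Vd p r) ?M ?f"
    unfolding virt_endo_def
  proof (intro conjI ballI sub)
    show "finite_index p (Vd p r) ?M" using MM_index[OF p0 j0] by simp
    show "?f ` ?M \<subseteq> Vd p r" using phi0_Vd[OF p0 j0] by auto
  next
    fix u v assume uv: "u \<in> ?M" "v \<in> ?M"
    show "?f (vadd p u v) = vadd p (?f u) (?f v)" by (rule phi0_add[OF p0 j0 uv])
    show "?f (?br u v) = ?br (?f u) (?f v)" by (rule phi0_br[OF p0 r c uv])
  next
    fix c u assume "c \<in> Zp p" "u \<in> ?M"
    then show "?f (vsmul p c u) = vsmul p c (?f u)" by (rule phi0_smul[OF p0 j0])
  qed
  have sim: "simple_ve p r ?br (Vd p r) ?M ?f"
    unfolding simple_ve_def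
  proof (intro allI impI notI)
    fix I assume I: "lie_ideal p r ?br (Vd p r) I \<and> I \<noteq> {vzero}"
      and inv: "phi_invariant (Vd p r) ?M ?f I"
    have ID: "I \<subseteq> DD p r k 1" using lie_ideal_DD I inv by blast
    have Ibr: "\<forall>h\<in>Vd p r. \<forall>x\<in>I. ?br h x \<in> I" and IV: "I \<subseteq> Vd p r" using I unfolding lie_ideal_def by auto
    obtain u where u: "u \<in> I" "u \<noteq> vzero" using I unfolding lie_ideal_def submod_def by auto
    have uV: "u \<in> Vd p r" using u IV by auto
    have Z: "u i \<in> Zp p" for i using Vd_Zp[OF p0 uV] .
    have zZ: "zp_zero \<in> Zp p" and oZ: "zp_one p \<in> Zp p" using zp_zero_Zp[OF p0] zp_one_Zp[OF p0] by auto
    have contra: False if wI: "w \<in> I" and w0: "w 0 = zp_zero" and wi: "w i \<noteq> zp_zero" for w i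
    proof -
      have "w = vzero" by (rule key[OF p0 j0 k]) (use ID wI w0 in auto)
      then show False using wi by (simp add: vzero_def)
    qed
    show False
    proof (cases "\<exists>i\<ge>1. u i \<noteq> zp_zero")
      case True
      then obtain i where i: "i \<ge> 1" "u i \<noteq> zp_zero" by auto
      define e0 where "e0 = (\<lambda>i::nat. if i = 0 then zp_one p else zp_zero)"
      have e0V: "e0 \<in> Vd p r" using r oZ zZ unfolding e0_def Vd_def by auto
      let ?w = "?br e0 u"
      have "?w \<in> I" using Ibr e0V u by auto
      moreover have "?w 0 = zp_zero" by (simp add: Ld_br_def)
      moreover have "?w i = zp_mul p c (u i)"
        using i by (simp add: Ld_br_def e0_def zp_one_mul[OF Z] zp_mul_zero zp_neg_zero zp_add_zero[OF Z])
      moreover have "zp_mul p c (u i) \<noteq> zp_zero" using zp_domain[OF pr c Z cnz i(2)] .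
      ultimately show False using contra by metis
    next
      case False
      then have ui: "\<And>i. i \<ge> 1 \<Longrightarrow> u i = zp_zero" by auto
      have u0: "u 0 \<noteq> zp_zero"
      proof
        assume "u 0 = zp_zero"
        then have "u i = zp_zero" for i using ui by (cases i) auto
        then have "u = vzero" unfolding vzero_def by auto
        then show False using u by simp
      qed
      define e1 where "e1 = (\<lambda>i::nat. if i = 1 then zp_one p else zp_zero)"
      have e1V: "e1 \<in> Vd p r" using r oZ zZ unfolding e1_def Vd_def by auto
      let ?w = "?br e1 u"
      have "?w \<in> I" using Ibr e1V u by auto
      moreover have "?w 0 = zp_zero" by (simp add: Ld_br_def)
      moreover have "?w 1 = zp_mul p c (zp_neg p (u 0))"
        using ui[of 1] by (simp add: Ld_br_def e1_def zp_mul_one[OF Z] zp_zero_mul zp_zero_add[OF zp_neg_Zp[OF p0 Z]])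
      moreover have "zp_mul p c (zp_neg p (u 0)) \<noteq> zp_zero"
        using zp_domain[OF pr c zp_neg_Zp[OF p0 Z] cnz zp_neg_nz[OF Z u0]] .
      ultimately show False using contra by metis
    qed
  qed
  show ?thesis unfolding self_similar_def using ve sim MM_index[OF p0 j0] by blast
qed



lemma lc_br:
  assumes p0: "p > 0" and r1: "length bs \<ge> 1"
    and tail: "\<And>t. 1 \<le> t \<Longrightarrow> t < length bs \<Longrightarrow> (bs ! t) 0 = zp_zero"
  shows "lc p bs (Ld_br p (zp_mul p a ((bs ! 0) 0)) x y) = Ld_br p a (lc p bs x) (lc p bs y)"
proof (intro ext)
  fix i n
  let ?r = "length bs" and ?P = "int p ^ n"
  let ?s = "(bs ! 0) 0 n"
  let ?b = "\<lambda>t. (bs ! t) i n"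
  have X0: "lc p bs z 0 n = (z 0 n * ?s) mod ?P" for z
  proof -
    have "(\<Sum>t<?r. z t n * (bs ! t) 0 n) = (\<Sum>t<?r. if t = 0 then z 0 n * ?s else 0)"
      by (rule sum.cong) (auto simp: tail zp_zero_def)
    also have "\<dots> = z 0 n * ?s" using r1 by (auto simp: sum.delta)
    finally show ?thesis unfolding lc_def by simp
  qed
  show "lc p bs (Ld_br p (zp_mul p a ((bs ! 0) 0)) x y) i n = Ld_br p a (lc p bs x) (lc p bs y) i n"
  proof (cases "i = 0")
    case True
    have "(\<Sum>t<?r. Ld_br p (zp_mul p a ((bs ! 0) 0)) x y t n * (bs ! t) 0 n) = 0"
      by (rule sum.neutral) (auto simp: Ld_br_def tail zp_zero_def)
    then show ?thesis using True unfolding lc_def by (simp add: Ld_br_def zp_zero_def)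
  next
    case False
    let ?g = "\<lambda>t. a n * ?s * (x 0 n * y t n - y 0 n * x t n) * ?b t"
    have "(\<Sum>t<?r. Ld_br p (zp_mul p a ((bs ! 0) 0)) x y t n * ?b t) mod ?P = (\<Sum>t<?r. ?g t) mod ?P"
    proof (rule sum_mod_cong)
      fix t
      show "Ld_br p (zp_mul p a ((bs ! 0) 0)) x y t n * ?b t mod ?P = ?g t mod ?P"
      proof (cases "t = 0")
        case True then show ?thesis by (simp add: Ld_br_def zp_zero_def)
      next
        case False
        then have "Ld_br p (zp_mul p a ((bs ! 0) 0)) x y t n * ?b t mod ?P
            = (a n * ?s * (x 0 n * y t n + - (y 0 n * x t n)) * ?b t) mod ?P"
          by (simp add: Ld_br_def zp_mul_def zp_add_def zp_neg_def mod_simps)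
        then show ?thesis by (simp add: algebra_simps)
      qed
    qed
    also have "(\<Sum>t<?r. ?g t) = a n * ?s * (x 0 n * (\<Sum>t<?r. y t n * ?b t) - y 0 n * (\<Sum>t<?r. x t n * ?b t))"
      by (simp add: sum_distrib_left sum_subtractf algebra_simps)
    finally have L: "lc p bs (Ld_br p (zp_mul p a ((bs ! 0) 0)) x y) i n
        = (a n * ?s * (x 0 n * (\<Sum>t<?r. y t n * ?b t) - y 0 n * (\<Sum>t<?r. x t n * ?b t))) mod ?P"
      unfolding lc_def by simp
    have R: "Ld_br p a (lc p bs x) (lc p bs y) i n
        = (a n * ((((x 0 n * ?s) mod ?P) * ((\<Sum>t<?r. y t n * ?b t) mod ?P) mod ?P
             + (- (((y 0 n * ?s) mod ?P) * ((\<Sum>t<?r. x t n * ?b t) mod ?P) mod ?P)) mod ?P) mod ?P)) mod ?P"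
    proof -
      have Y: "lc p bs z i n = (\<Sum>t<?r. z t n * ?b t) mod ?P" for z unfolding lc_def by simp
      have "Ld_br p a (lc p bs x) (lc p bs y) i n = (a n * (((lc p bs x 0 n * lc p bs y i n) mod ?P
           + (- ((lc p bs y 0 n * lc p bs x i n) mod ?P)) mod ?P) mod ?P)) mod ?P"
      proof -
        have i1: "1 \<le> i" using False by simp
        show ?thesis unfolding Ld_br_def using i1 by (simp only: if_True zp_mul_def zp_add_def zp_neg_def)
      qed
      then show ?thesis unfolding X0 Y .
    qed
    also have "\<dots> = (a n * (x 0 n * ?s * (\<Sum>t<?r. y t n * ?b t) + - (y 0 n * ?s * (\<Sum>t<?r. x t n * ?b t)))) mod ?P"
      by (simp add: mod_simps)
    also have "\<dots> = (a n * ?s * (x 0 n * (\<Sum>t<?r. y t n * ?b t) - y 0 n * (\<Sum>t<?r. x t n * ?b t))) mod ?P"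
      by (simp add: algebra_simps)
    finally show ?thesis using L by simp
  qed
qed



lemma Ld_br_zero_c: "Ld_br p zp_zero x y = vzero"
  unfolding Ld_br_def vzero_def by (auto simp: zp_zero_mul)

lemma Ld_br_r1:
  assumes "p > 0" "x \<in> Vd p 1" "y \<in> Vd p 1" shows "Ld_br p c x y = vzero"
proof -
  have "x i = zp_zero" "y i = zp_zero" if "1 \<le> i" for i using assms(2,3) that by (auto simp: Vd_def)
  then show ?thesis unfolding Ld_br_def vzero_def
    by (auto simp: zp_mul_zero zp_neg_zero zp_add_zero[OF zp_zero_Zp[OF assms(1)]])
qed

lemma sub_ss:
  assumes pr: "prime p" and k: "k \<ge> 1" and a: "a \<in> Zp p"
    and S: "subalg p d (Ld_br p a) (Vd p d) S" and Snz: "S \<noteq> {vzero}"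
  shows "self_similar p d (Ld_br p a) S k"
proof -
  have p0: "p > 0" using pr prime_gt_0_nat by blast
  have Ssub: "submod p d S" and SV: "S \<subseteq> Vd p d" using S unfolding subalg_def submod_def by auto
  obtain bs where bs: "set bs \<subseteq> S" "bij_betw (lc p bs) (Vd p (length bs)) S"
      "\<forall>t. 1 \<le> t \<and> t < length bs \<longrightarrow> (bs ! t) 0 = zp_zero"
  proof -
    have "\<exists>bs. set bs \<subseteq> S \<and> bij_betw (lc p bs) (Vd p (length bs)) S \<and>
        (\<forall>t. 1 \<le> t \<and> t < length bs \<longrightarrow> (bs ! t) 0 = zp_zero)"
      by (rule basis_gen[OF pr refl Ssub]) simp
    then show ?thesis using that by blast
  qed
  let ?r = "length bs"
  have r1: "?r \<ge> 1"
  proof (rule ccontr)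
    assume "\<not> ?r \<ge> 1"
    then have "bs = []" by (cases bs) auto
    then have "S = {vzero}" using bs(2) unfolding bij_betw_def by (simp add: Vd_0 lc_Nil)
    then show False using Snz by simp
  qed
  have b0: "bs ! 0 \<in> Vd p d"
  proof -
    have "0 < length bs" using r1 by linarith
    then have "bs ! 0 \<in> set bs" by (rule nth_mem)
    then show ?thesis using bs(1) SV by blast
  qed
  define c where "c = zp_mul p a ((bs ! 0) 0)"
  have cZ: "c \<in> Zp p" unfolding c_def by (rule zp_mul_Zp[OF p0 a Vd_Zp[OF p0 b0]])
  have ss: "self_similar p ?r (Ld_br p c) (Vd p ?r) k"
  proof (cases "c = zp_zero \<or> ?r = 1")
    case True
    show ?thesis
    proof (rule ss_ab[OF pr r1 k])
      fix x y assume "x \<in> Vd p ?r" "y \<in> Vd p ?r"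
      then show "Ld_br p c x y = vzero" using True Ld_br_zero_c Ld_br_r1[OF p0] by auto
    qed
  next
    case False
    then show ?thesis using ss_na[OF pr _ k cZ] r1 by auto
  qed
  show ?thesis
  proof (rule transfer[OF p0 bs(2) SV _ _ _ _ _ _ ss])
    show "\<And>x y. lc p bs (vadd p x y) = vadd p (lc p bs x) (lc p bs y)" by (rule lc_vadd)
    show "\<And>c x. lc p bs (vsmul p c x) = vsmul p c (lc p bs x)" by (rule lc_vsmul)
    show "\<And>x y. lc p bs (vsub p x y) = vsub p (lc p bs x) (lc p bs y)" by (rule lc_vsub)
    show "\<And>x y. lc p bs (Ld_br p c x y) = Ld_br p a (lc p bs x) (lc p bs y)"
      unfolding c_def by (rule lc_br[OF p0 r1]) (use bs(3) in auto)
    show "lc p bs vzero = vzero" by (rule lc_vzero)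
    show "\<And>x y. x \<in> Vd p ?r \<Longrightarrow> y \<in> Vd p ?r \<Longrightarrow> Ld_br p c x y \<in> Vd p ?r"
      by (rule Ld_br_Vd[OF p0 cZ])
  qed
qed

theorem proposition1p40:
  fixes p d k :: nat and a :: zp
  assumes "prime p" and "d \<ge> 2" and "k \<ge> 1" and "a \<in> Zp p"
  shows "self_similar p d (Ld_br p a) (Vd p d) k
       \<and> strongly_hered_self_similar p d (Ld_br p a) (Vd p d) k"
proof -
  have p0: "p > 0" using assms(1) prime_gt_0_nat by blast
  have full: "subalg p d (Ld_br p a) (Vd p d) (Vd p d)"
    unfolding subalg_def submod_def
    using vzero_Vd[OF p0] vadd_Vd[OF p0] vsmul_Vd[OF p0] Ld_br_Vd[OF p0 assms(4)] by auto
  have nz: "Vd p d \<noteq> {vzero}"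
  proof
    assume h: "Vd p d = {vzero}"
    define e0 where "e0 = (\<lambda>i::nat. if i = 0 then zp_one p else zp_zero)"
    have "e0 \<in> Vd p d" using assms(2) zp_one_Zp[OF p0] zp_zero_Zp[OF p0] unfolding e0_def Vd_def by auto
    moreover have "e0 \<noteq> vzero"
    proof
      assume "e0 = vzero"
      then have "e0 0 1 = vzero 0 1" by simp
      then have "zp_one p 1 = 0" unfolding e0_def vzero_def zp_zero_def by simp
      moreover have "zp_one p 1 = 1" using prime_gt_1_nat[OF assms(1)] unfolding zp_one_def by simp
      ultimately show False by simp
    qed
    ultimately show False using h by auto
  qed
  have s1: "self_similar p d (Ld_br p a) (Vd p d) k" by (rule sub_ss[OF assms(1,3,4) full nz])
  moreover have "strongly_hered_self_similar p d (Ld_br p a) (Vd p d) k"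
    unfolding strongly_hered_self_similar_def using s1 sub_ss[OF assms(1,3,4)] by blast
  ultimately show ?thesis by blast
qed


end
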